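(* Let $G$ be a connected $K_{1,4}$-free graph with no Hamiltonian path, and let $T$ be a spanning tree of $G$ satisfying (C1) and (C2). Let $b,r\in B(T)$ be such that $V(P_T[b,r])\cap B(T)=\{b,r\}$. Then every vertex $x\in V(P_T[b,r])\setminus\{b,r\}$ is adjacent in $G$ to at most one vertex of $L(T)$.
   Context: All graphs are finite and simple. A graph is $K_{1,4}$-free if it has no induced subgraph isomorphic to $K_{1,4}$. For a tree $T$, $L(T)$ is the set of leaves (degree-one vertices) and $B(T)$ the set of branch vertices (degree at least three); $P_T[u,v]$ is the unique path in $T$ between $u$ and $v$. Since $G$ has no Hamiltonian path, every spanning tree of $G$ has a branch vertex. Reducible stem: for a tree $T$ with $B(T)\neq\emptyset$ and each leaf $x\in L(T)$, let $y_x\in B(T)$ be the branch vertex such that $P_T[x,y_x]$ contains no branch vertex other than $y_x$; deleting $V(P_T[x,y_x])\setminus\{y_x\}$ from $T$ for all $x\in L(T)$ yields a subtree $R\_Stem(T)$. Condition (C1): $|L(T)|$ is minimum among all spanning trees of $G$. Condition (C2): subject to (C1), $|V(R\_Stem(T))|$ is maximum. *)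

theory Defs
  imports Main
begin

definition simple_graph :: "'a set \<Rightarrow> 'a set set \<Rightarrow> bool" where
  "simple_graph V E \<longleftrightarrow> finite V \<and>
     (\<forall>e\<in>E. \<exists>u v. u \<noteq> v \<and> u \<in> V \<and> v \<in> V \<and> e = {u, v})"

definition is_path :: "'a set set \<Rightarrow> 'a list \<Rightarrow> bool" where
  "is_path F p \<longleftrightarrow> p \<noteq> [] \<and> distinct p \<and>
     (\<forall>i. Suc i < length p \<longrightarrow> {p ! i, p ! Suc i} \<in> F)"

definition connected_on :: "'a set \<Rightarrow> 'a set set \<Rightarrow> bool" where
  "connected_on V F \<longleftrightarrow>
     (\<forall>u\<in>V. \<forall>v\<in>V. \<exists>p. is_path F p \<and> hd p = u \<and> last p = v)"

definition has_cycle :: "'a set set \<Rightarrow> bool" where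
  "has_cycle F \<longleftrightarrow> (\<exists>p. is_path F p \<and> length p \<ge> 3 \<and> {last p, hd p} \<in> F)"

definition spanning_tree :: "'a set \<Rightarrow> 'a set set \<Rightarrow> 'a set set \<Rightarrow> bool" where
  "spanning_tree V E T \<longleftrightarrow> T \<subseteq> E \<and> connected_on V T \<and> \<not> has_cycle T"

definition hamiltonian_path :: "'a set \<Rightarrow> 'a set set \<Rightarrow> 'a list \<Rightarrow> bool" where
  "hamiltonian_path V E p \<longleftrightarrow> is_path E p \<and> set p = V"

definition K14_free :: "'a set \<Rightarrow> 'a set set \<Rightarrow> bool" where
  "K14_free V E \<longleftrightarrow> \<not> (\<exists>c\<in>V. \<exists>S\<subseteq>V. card S = 4 \<and>
      (\<forall>x\<in>S. {c, x} \<in> E) \<and> (\<forall>x\<in>S. \<forall>y\<in>S. x \<noteq> y \<longrightarrow> {x, y} \<notin> E))"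

definition tdeg :: "'a set set \<Rightarrow> 'a \<Rightarrow> nat" where
  "tdeg T v = card {e\<in>T. v \<in> e}"

definition leaves :: "'a set \<Rightarrow> 'a set set \<Rightarrow> 'a set" where
  "leaves V T = {v\<in>V. tdeg T v = 1}"

definition branches :: "'a set \<Rightarrow> 'a set set \<Rightarrow> 'a set" where
  "branches V T = {v\<in>V. tdeg T v \<ge> 3}"

text \<open>Vertex set of the (unique) path P_T[u,v] in the tree T.\<close>
definition tpath :: "'a set set \<Rightarrow> 'a \<Rightarrow> 'a \<Rightarrow> 'a set" where
  "tpath T u v = set (THE p. is_path T p \<and> hd p = u \<and> last p = v)"

definition stem_removed :: "'a set \<Rightarrow> 'a set set \<Rightarrow> 'a \<Rightarrow> 'a set" where
  "stem_removed V T x = (let y = (THE y. y \<in> branches V T \<and> tpath T x y \<inter> branches V T = {y})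
                          in tpath T x y - {y})"

definition R_stem_verts :: "'a set \<Rightarrow> 'a set set \<Rightarrow> 'a set" where
  "R_stem_verts V T = V - (\<Union>x\<in>leaves V T. stem_removed V T x)"

definition C1 :: "'a set \<Rightarrow> 'a set set \<Rightarrow> 'a set set \<Rightarrow> bool" where
  "C1 V E T \<longleftrightarrow> spanning_tree V E T \<and>
     (\<forall>T'. spanning_tree V E T' \<longrightarrow> card (leaves V T) \<le> card (leaves V T'))"

definition C2 :: "'a set \<Rightarrow> 'a set set \<Rightarrow> 'a set set \<Rightarrow> bool" where
  "C2 V E T \<longleftrightarrow> C1 V E T \<and>
     (\<forall>T'. C1 V E T' \<longrightarrow> card (R_stem_verts V T') \<le> card (R_stem_verts V T))"

end

theory Submission
  imports Defs
begin


definition adj :: "'a set set \<Rightarrow> 'a \<Rightarrow> 'a \<Rightarrow> bool" where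
  "adj S x y \<longleftrightarrow> {x, y} \<in> S"

lemma adj_sym: "adj S x y \<Longrightarrow> adj S y x"
  by (simp add: adj_def insert_commute)

lemma reach_sym: "(adj S)\<^sup>*\<^sup>* x y \<Longrightarrow> (adj S)\<^sup>*\<^sup>* y x"
proof (induction rule: rtranclp_induct)
  case base then show ?case by simp
next
  case (step y z)
  then show ?case by (meson adj_sym converse_rtranclp_into_rtranclp)
qed

lemma reach_mono: "(adj S)\<^sup>*\<^sup>* x y \<Longrightarrow> S \<subseteq> S' \<Longrightarrow> (adj S')\<^sup>*\<^sup>* x y"
proof (induction rule: rtranclp_induct)
  case base then show ?case by simp
next
  case (step y z)
  then show ?case unfolding adj_def by (meson in_mono rtranclp.rtrancl_into_rtrancl)
qed

lemma is_pathD: "is_path S p \<Longrightarrow> Suc i < length p \<Longrightarrow> {p ! i, p ! Suc i} \<in> S"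
  by (simp add: is_path_def)

lemma path_take: "is_path S p \<Longrightarrow> 0 < k \<Longrightarrow> is_path S (take k p)"
  unfolding is_path_def by (auto simp: distinct_take)

lemma path_snoc: "is_path S p \<Longrightarrow> z \<notin> set p \<Longrightarrow> {last p, z} \<in> S \<Longrightarrow> is_path S (p @ [z])"
  unfolding is_path_def
proof (intro conjI allI impI)
  fix i assume h: "p \<noteq> [] \<and> distinct p \<and> (\<forall>i. Suc i < length p \<longrightarrow> {p ! i, p ! Suc i} \<in> S)"
    "z \<notin> set p" "{last p, z} \<in> S" "Suc i < length (p @ [z])"
  show "{(p @ [z]) ! i, (p @ [z]) ! Suc i} \<in> S"
  proof (cases "Suc i < length p")
    case True then show ?thesis using h by (simp add: nth_append)
  next
    case False
    then have "Suc i = length p" using h by simp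
    then have "i = length p - 1" by simp
    then show ?thesis using h \<open>Suc i = length p\<close> by (simp add: nth_append last_conv_nth)
  qed
qed auto

lemma path_cons: "is_path S p \<Longrightarrow> a \<notin> set p \<Longrightarrow> {a, hd p} \<in> S \<Longrightarrow> is_path S (a # p)"
  unfolding is_path_def
proof (intro conjI allI impI)
  fix i assume h: "p \<noteq> [] \<and> distinct p \<and> (\<forall>i. Suc i < length p \<longrightarrow> {p ! i, p ! Suc i} \<in> S)"
    "a \<notin> set p" "{a, hd p} \<in> S" "Suc i < length (a # p)"
  show "{(a # p) ! i, (a # p) ! Suc i} \<in> S"
  proof (cases i)
    case 0 then show ?thesis using h by (simp add: hd_conv_nth)
  next
    case (Suc j) then show ?thesis using h by simp
  qed
qed auto

lemma path_rev: "is_path S p \<Longrightarrow> is_path S (rev p)"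
  unfolding is_path_def
proof (intro conjI allI impI)
  fix i assume h: "p \<noteq> [] \<and> distinct p \<and> (\<forall>i. Suc i < length p \<longrightarrow> {p ! i, p ! Suc i} \<in> S)"
    "Suc i < length (rev p)"
  define j where "j = length p - Suc (Suc i)"
  have j: "Suc j < length p" "rev p ! i = p ! Suc j" "rev p ! Suc i = p ! j"
    using h by (auto simp: rev_nth j_def Suc_diff_Suc)
  show "{rev p ! i, rev p ! Suc i} \<in> S" using h j by (simp add: insert_commute)
qed auto

lemma path_reach_nth: "is_path S p \<Longrightarrow> i < length p \<Longrightarrow> (adj S)\<^sup>*\<^sup>* (hd p) (p ! i)"
proof (induction i)
  case 0 then show ?case by (simp add: hd_conv_nth is_path_def)
next
  case (Suc i)
  then have "adj S (p ! i) (p ! Suc i)" by (simp add: adj_def is_path_def)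
  with Suc show ?case by (meson Suc_lessD rtranclp.rtrancl_into_rtrancl)
qed

lemma path_reach: "is_path S p \<Longrightarrow> (adj S)\<^sup>*\<^sup>* (hd p) (last p)"
  using path_reach_nth[of S p "length p - 1"] by (simp add: is_path_def last_conv_nth)

lemma reach_path: "(adj S)\<^sup>*\<^sup>* a b \<Longrightarrow> \<exists>p. is_path S p \<and> hd p = a \<and> last p = b"
proof (induction rule: rtranclp_induct)
  case base then show ?case by (intro exI[of _ "[a]"]) (simp add: is_path_def)
next
  case (step y z)
  then obtain p where p: "is_path S p" "hd p = a" "last p = y" by blast
  show ?case
  proof (cases "z \<in> set p")
    case True
    then obtain k where k: "k < length p" "p ! k = z" by (meson in_set_conv_nth)
    have "is_path S (take (Suc k) p)" using p path_take by blast
    moreover have "hd (take (Suc k) p) = a" using p k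
      by (metis hd_take zero_less_Suc)
    moreover have "last (take (Suc k) p) = z" using k
      by (simp add: take_Suc_conv_app_nth)
    ultimately show ?thesis by blast
  next
    case False
    have "is_path S (p @ [z])" using p False step(2) path_snoc by (fastforce simp: adj_def)
    moreover have "hd (p @ [z]) = a" using p by (simp add: is_path_def)
    ultimately show ?thesis by (intro exI[of _ "p @ [z]"]) simp
  qed
qed

lemma connected_on_reach: "connected_on V S \<longleftrightarrow> (\<forall>u\<in>V. \<forall>v\<in>V. (adj S)\<^sup>*\<^sup>* u v)"
  unfolding connected_on_def using path_reach reach_path by metis



lemma sg_finite: "simple_graph V S \<Longrightarrow> finite S"
proof -
  assume a: "simple_graph V S"
  have "S \<subseteq> Pow V"
  proof
    fix e assume "e \<in> S"
    then obtain u v where "u \<in> V" "v \<in> V" "e = {u, v}" using a unfolding simple_graph_def by blast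
    then show "e \<in> Pow V" by simp
  qed
  moreover have "finite (Pow V)" using a unfolding simple_graph_def by simp
  ultimately show ?thesis by (rule finite_subset)
qed

lemma sg_edge: "simple_graph V S \<Longrightarrow> {a, c} \<in> S \<Longrightarrow> a \<noteq> c \<and> a \<in> V \<and> c \<in> V"
proof -
  assume "simple_graph V S" "{a, c} \<in> S"
  then obtain u v where uv: "u \<noteq> v" "u \<in> V" "v \<in> V" "{a, c} = {u, v}"
    unfolding simple_graph_def by blast
  then show ?thesis by (auto simp: doubleton_eq_iff)
qed

lemma sg_mono: "simple_graph V S \<Longrightarrow> S' \<subseteq> S \<Longrightarrow> simple_graph V S'"
  unfolding simple_graph_def by blast

lemma path_mono: "is_path S p \<Longrightarrow> S \<subseteq> S' \<Longrightarrow> is_path S' p"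
  unfolding is_path_def by blast

lemma path_tl: assumes "is_path S (a # p)" "p \<noteq> []" shows "is_path S p"
  unfolding is_path_def
proof (intro conjI allI impI)
  fix i assume "Suc i < length p"
  then have "{(a#p) ! Suc i, (a#p) ! Suc (Suc i)} \<in> S" using is_pathD[OF assms(1), of "Suc i"] by simp
  then show "{p ! i, p ! Suc i} \<in> S" by simp
qed (use assms in \<open>auto simp: is_path_def\<close>)

lemma path_nth_V: "simple_graph V S \<Longrightarrow> is_path S p \<Longrightarrow> hd p \<in> V \<Longrightarrow> i < length p \<Longrightarrow> p ! i \<in> V"
proof (induction i)
  case 0 then show ?case by (simp add: hd_conv_nth is_path_def)
next
  case (Suc i)
  then have "{p ! i, p ! Suc i} \<in> S" using is_pathD by blast
  then show ?case using sg_edge[OF Suc.prems(1)] by blast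
qed

lemma path_set_V: "simple_graph V S \<Longrightarrow> is_path S p \<Longrightarrow> hd p \<in> V \<Longrightarrow> set p \<subseteq> V"
proof
  fix x assume a: "simple_graph V S" "is_path S p" "hd p \<in> V" "x \<in> set p"
  then obtain i where "i < length p" "p ! i = x" by (auto simp: in_set_conv_nth)
  then show "x \<in> V" using path_nth_V[OF a(1-3)] by blast
qed

lemma path_avoid: "is_path S p \<Longrightarrow> (\<forall>i. Suc i < length p \<longrightarrow> {p ! i, p ! Suc i} \<noteq> e) \<Longrightarrow> is_path (S - {e}) p"
  unfolding is_path_def by blast

lemma path_avoid_vertex: "is_path S p \<Longrightarrow> a \<notin> set p \<Longrightarrow> a \<in> e \<Longrightarrow> is_path (S - {e}) p"
proof (rule path_avoid)
  assume a: "is_path S p" "a \<notin> set p" "a \<in> e"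
  show "\<forall>i. Suc i < length p \<longrightarrow> {p ! i, p ! Suc i} \<noteq> e"
  proof (intro allI impI notI)
    fix i assume i: "Suc i < length p" "{p ! i, p ! Suc i} = e"
    then have "a = p ! i \<or> a = p ! Suc i" using a(3) by auto
    moreover have "p ! i \<in> set p" "p ! Suc i \<in> set p" using i(1) by auto
    ultimately show False using a(2) by auto
  qed
qed

lemma cycle_of_path: "is_path S p \<Longrightarrow> length p \<ge> 3 \<Longrightarrow> {last p, hd p} \<in> S \<Longrightarrow> has_cycle S"
  unfolding has_cycle_def by blast

lemma distinct_hd_last: "distinct q \<Longrightarrow> q \<noteq> [] \<Longrightarrow> hd q = last q \<Longrightarrow> q = [hd q]"
proof (cases q)
  case (Cons a q')
  assume "distinct q" "hd q = last q"
  then show ?thesis using Cons by (cases "q' = []") auto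
qed simp

lemma unique_path:
  assumes sg: "simple_graph V S" and nc: "\<not> has_cycle S"
  shows "is_path S p \<Longrightarrow> is_path S q \<Longrightarrow> hd p = hd q \<Longrightarrow> last p = last q \<Longrightarrow> p = q"
proof (induction p arbitrary: q)
  case Nil then show ?case by (simp add: is_path_def)
next
  case (Cons a p')
  have qne: "q \<noteq> []" using Cons.prems by (simp add: is_path_def)
  then obtain a' q' where q0: "q = a' # q'" by (cases q) auto
  then have q: "q = a # q'" using Cons.prems(3) by simp
  show ?case
  proof (cases "p' = []")
    case True
    then have hl: "hd q = last q" using Cons.prems by simp
    have dq: "distinct q" using Cons.prems(2) by (simp add: is_path_def)
    have "q = [hd q]" using distinct_hd_last[OF dq qne hl] .
    then show ?thesis using True Cons.prems by simp
  next
    case pne: False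
    show ?thesis
    proof (cases "q' = []")
      case True
      then have "hd (a # p') = last (a # p')" using Cons.prems q by simp
      moreover have "distinct (a # p')" using Cons.prems(1) by (simp add: is_path_def)
      ultimately have "a # p' = [a]" using distinct_hd_last[of "a # p'"] by simp
      then have False using pne by simp
      then show ?thesis ..
    next
      case qne': False
      have pp: "is_path S p'" using path_tl[OF Cons.prems(1) pne] .
      have qp: "is_path S q'" using path_tl[of S a q'] Cons.prems(2) qne' q by simp
      show ?thesis
      proof (cases "hd p' = hd q'")
        case True
        have "last p' = last q'" using Cons.prems q pne qne' by simp
        then show ?thesis using Cons.IH[OF pp qp True] q by simp
      next
        case False
        define c where "c = hd p'"
        define d where "d = hd q'"
        have ac: "{a, c} \<in> S" using is_pathD[OF Cons.prems(1), of 0] pne by (simp add: c_def hd_conv_nth)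
        have ad: "{a, d} \<in> S" using is_pathD[OF Cons.prems(2), of 0] qne' q by (simp add: d_def hd_conv_nth)
        have anp: "a \<notin> set p'" using Cons.prems(1) by (simp add: is_path_def)
        have anq: "a \<notin> set q'" using Cons.prems(2) q by (simp add: is_path_def)
        let ?S = "S - {{a, c}}"
        have r1: "(adj ?S)\<^sup>*\<^sup>* c (last p')"
          using path_reach[OF path_avoid_vertex[OF pp anp, of "{a,c}"]] c_def by simp
        have r2: "(adj ?S)\<^sup>*\<^sup>* (last q') d"
          using reach_sym[OF path_reach[OF path_avoid_vertex[OF qp anq, of "{a,c}"]]] d_def by simp
        have "c \<noteq> d" using False c_def d_def by simp
        then have "{d, a} \<in> ?S" using ad by (auto simp: doubleton_eq_iff insert_commute)
        then have r3: "adj ?S d a" by (simp add: adj_def)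
        have "last p' = last q'" using Cons.prems q pne qne' by simp
        then have "(adj ?S)\<^sup>*\<^sup>* c (last q')" using r1 by simp
        then have "(adj ?S)\<^sup>*\<^sup>* c d" using r2 by (rule rtranclp_trans)
        then have rc: "(adj ?S)\<^sup>*\<^sup>* c a" using r3 by (rule rtranclp.rtrancl_into_rtrancl)
        obtain r where r: "is_path ?S r" "hd r = c" "last r = a" using reach_path[OF rc] by blast
        have "c \<noteq> a" using anp c_def pne by auto
        have "r \<noteq> []" using r by (simp add: is_path_def)
        moreover have "length r \<noteq> 1"
        proof
          assume "length r = 1"
          then obtain x where "r = [x]" by (auto simp: length_Suc_conv)
          then show False using r \<open>c \<noteq> a\<close> by simp
        qed
        ultimately have lr: "length r \<ge> 2" by (cases "length r") auto
        show ?thesis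
        proof (cases "length r = 2")
          case True
          then obtain x y where "r = [x, y]" by (auto simp: length_Suc_conv numeral_2_eq_2)
          then have "r = [c, a]" using r by simp
          then have "{c, a} \<in> ?S" using r(1) is_pathD[of ?S r 0] by simp
          then show ?thesis by (simp add: insert_commute)
        next
          case False
          then have "length r \<ge> 3" using lr by simp
          moreover have "{last r, hd r} \<in> S" using r ac by (simp add: insert_commute)
          moreover have "is_path S r" using path_mono[OF r(1) Diff_subset] .
          ultimately have "has_cycle S" by (rule cycle_of_path[rotated])
          then show ?thesis using nc by simp
        qed
      qed
    qed
  qed
qed



definition is_tree :: "'a set \<Rightarrow> 'a set set \<Rightarrow> bool" where
  "is_tree V S \<longleftrightarrow> simple_graph V S \<and> connected_on V S \<and> \<not> has_cycle S"

definition tp :: "'a set set \<Rightarrow> 'a \<Rightarrow> 'a \<Rightarrow> 'a list" where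
  "tp S u v = (THE p. is_path S p \<and> hd p = u \<and> last p = v)"

lemma spanning_is_tree: "simple_graph V E \<Longrightarrow> spanning_tree V E S \<Longrightarrow> is_tree V S"
  unfolding spanning_tree_def is_tree_def using sg_mono by blast

lemma tpath_tp: "tpath S u v = set (tp S u v)"
  by (simp add: tpath_def tp_def)

lemma tp_unique:
  assumes "is_tree V S" "is_path S p" "hd p = u" "last p = v"
  shows "tp S u v = p"
proof -
  have sg: "simple_graph V S" and nc: "\<not> has_cycle S" using assms(1) by (auto simp: is_tree_def)
  show ?thesis unfolding tp_def
  proof (rule the_equality)
    show "is_path S p \<and> hd p = u \<and> last p = v" using assms by simp
    fix q assume "is_path S q \<and> hd q = u \<and> last q = v"
    then show "q = p" using unique_path[OF sg nc, of q p] assms by simp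
  qed
qed

lemma tp_props:
  assumes "is_tree V S" "u \<in> V" "v \<in> V"
  shows "is_path S (tp S u v) \<and> hd (tp S u v) = u \<and> last (tp S u v) = v"
proof -
  have "connected_on V S" using assms(1) by (simp add: is_tree_def)
  then obtain p where p: "is_path S p" "hd p = u" "last p = v"
    using assms(2,3) unfolding connected_on_def by blast
  then show ?thesis using tp_unique[OF assms(1) p] by simp
qed

lemma path_edge_inj:
  assumes "is_path S p" "Suc m < length p" "Suc j < length p" "{p ! m, p ! Suc m} = {p ! j, p ! Suc j}"
  shows "m = j"
proof -
  have d: "distinct p" using assms(1) by (simp add: is_path_def)
  from assms(4) have "(p ! m = p ! j \<and> p ! Suc m = p ! Suc j) \<or> (p ! m = p ! Suc j \<and> p ! Suc m = p ! j)"
    by (auto simp: doubleton_eq_iff)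
  then show ?thesis
  proof
    assume "p ! m = p ! j \<and> p ! Suc m = p ! Suc j"
    then show ?thesis using d assms(2,3) nth_eq_iff_index_eq by (metis Suc_lessD)
  next
    assume h: "p ! m = p ! Suc j \<and> p ! Suc m = p ! j"
    then have "m = Suc j" using d assms(2,3) nth_eq_iff_index_eq by (metis Suc_lessD)
    moreover have "Suc m = j" using h d assms(2,3) nth_eq_iff_index_eq by (metis Suc_lessD)
    ultimately show ?thesis by simp
  qed
qed

lemma path_closing_ne:
  assumes "is_path S p" "length p \<ge> 3" "Suc m < length p"
  shows "{p ! m, p ! Suc m} \<noteq> {last p, hd p}"
proof
  assume h: "{p ! m, p ! Suc m} = {last p, hd p}"
  have d: "distinct p" using assms(1) by (simp add: is_path_def)
  have ne: "p \<noteq> []" using assms(2) by auto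
  have l: "last p = p ! (length p - 1)" "hd p = p ! 0" using ne by (auto simp: last_conv_nth hd_conv_nth)
  from h have "(p ! m = last p \<and> p ! Suc m = hd p) \<or> (p ! m = hd p \<and> p ! Suc m = last p)"
    by (auto simp: doubleton_eq_iff)
  then show False
  proof
    assume "p ! m = last p \<and> p ! Suc m = hd p"
    then have "Suc m = 0" using d assms l nth_eq_iff_index_eq by (metis length_greater_0_conv ne)
    then show False by simp
  next
    assume a: "p ! m = hd p \<and> p ! Suc m = last p"
    then have "Suc m = length p - 1" using d assms l nth_eq_iff_index_eq
      by (metis diff_less length_greater_0_conv ne zero_less_one)
    moreover have "m = 0" using a d assms l nth_eq_iff_index_eq by (metis Suc_lessD length_greater_0_conv ne)
    ultimately show False using assms(2) by simp
  qed
qed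

lemma reach_segment:
  assumes "is_path S p" "i \<le> k" "k < length p" "\<forall>m. i \<le> m \<and> m < k \<longrightarrow> {p ! m, p ! Suc m} \<in> S'"
  shows "(adj S')\<^sup>*\<^sup>* (p ! i) (p ! k)"
  using assms(2,3,4)
proof (induction k)
  case 0 then show ?case by simp
next
  case (Suc k)
  show ?case
  proof (cases "i = Suc k")
    case True then show ?thesis by simp
  next
    case False
    then have "i \<le> k" using Suc.prems by simp
    then have r: "(adj S')\<^sup>*\<^sup>* (p ! i) (p ! k)" using Suc by simp
    have "adj S' (p ! k) (p ! Suc k)" using Suc.prems \<open>i \<le> k\<close> by (simp add: adj_def)
    then show ?thesis using r by (rule rtranclp.rtrancl_into_rtrancl[rotated])
  qed
qed

lemma add_edge_acyclic:
  assumes nc: "\<not> has_cycle F" and c: "has_cycle (insert e F)" and e: "e = {a, c}"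
  shows "(adj F)\<^sup>*\<^sup>* a c"
proof -
  obtain p where p: "is_path (insert e F) p" "length p \<ge> 3" "{last p, hd p} \<in> insert e F"
    using c unfolding has_cycle_def by blast
  define n where "n = length p"
  have ne: "p \<noteq> []" using p(2) by auto
  have l: "last p = p ! (n - 1)" "hd p = p ! 0" using ne by (auto simp: last_conv_nth hd_conv_nth n_def)
  show ?thesis
  proof (cases "\<exists>k. Suc k < n \<and> {p ! k, p ! Suc k} \<notin> F")
    case False
    then have pf: "is_path F p" using p(1) unfolding is_path_def n_def by blast
    have "{last p, hd p} \<notin> F" using nc pf p(2) cycle_of_path by blast
    then have ee: "{last p, hd p} = e" using p(3) by blast
    have "(adj F)\<^sup>*\<^sup>* (p ! 0) (p ! (n - 1))"
      using reach_segment[OF pf, of 0 "n - 1" F] False ne n_def by auto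
    then have "(adj F)\<^sup>*\<^sup>* (hd p) (last p)" using l by simp
    then show ?thesis using ee e reach_sym by (auto simp: doubleton_eq_iff)
  next
    case True
    then obtain k where k: "Suc k < n" "{p ! k, p ! Suc k} \<notin> F" by blast
    have ek: "{p ! k, p ! Suc k} = e" using k p(1) is_pathD n_def by blast
    have oth: "\<forall>m. Suc m < n \<and> m \<noteq> k \<longrightarrow> {p ! m, p ! Suc m} \<in> F"
    proof (intro allI impI)
      fix m assume m: "Suc m < n \<and> m \<noteq> k"
      have "{p ! m, p ! Suc m} \<in> insert e F" using p(1) m is_pathD n_def by blast
      moreover have "{p ! m, p ! Suc m} \<noteq> e"
        using path_edge_inj[OF p(1), of m k] m k ek n_def by auto
      ultimately show "{p ! m, p ! Suc m} \<in> F" by blast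
    qed
    have "{last p, hd p} \<noteq> e" using path_closing_ne[OF p(1) p(2), of k] k ek n_def by simp
    then have cl: "{last p, hd p} \<in> F" using p(3) by blast
    have r1: "(adj F)\<^sup>*\<^sup>* (p ! Suc k) (p ! (n - 1))"
      using reach_segment[OF p(1), of "Suc k" "n - 1" F] oth k n_def by auto
    have r2: "adj F (p ! (n - 1)) (p ! 0)" using cl l by (simp add: adj_def)
    have r3: "(adj F)\<^sup>*\<^sup>* (p ! 0) (p ! k)"
      using reach_segment[OF p(1), of 0 k F] oth k n_def by auto
    have "(adj F)\<^sup>*\<^sup>* (p ! Suc k) (p ! k)"
      using r1 r2 r3 by (meson rtranclp.rtrancl_into_rtrancl rtranclp_trans)
    then show ?thesis using ek e reach_sym by (auto simp: doubleton_eq_iff)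
  qed
qed



lemma has_cycle_mono: "has_cycle S \<Longrightarrow> S \<subseteq> S' \<Longrightarrow> has_cycle S'"
proof -
  assume a: "has_cycle S" "S \<subseteq> S'"
  then obtain p where p: "is_path S p" "length p \<ge> 3" "{last p, hd p} \<in> S" unfolding has_cycle_def by blast
  have "is_path S' p" using path_mono[OF p(1) a(2)] .
  moreover have "{last p, hd p} \<in> S'" using p(3) a(2) by blast
  ultimately show ?thesis using p(2) cycle_of_path by blast
qed

lemma reach_lift:
  assumes "\<And>x y. adj S x y \<Longrightarrow> (adj S')\<^sup>*\<^sup>* x y"
  shows "(adj S)\<^sup>*\<^sup>* u v \<Longrightarrow> (adj S')\<^sup>*\<^sup>* u v"
proof (induction rule: rtranclp_induct)
  case base then show ?case by simp
next
  case (step y z)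
  have "(adj S')\<^sup>*\<^sup>* y z" using assms step.hyps(2) .
  then show ?case using step.IH by (rule rtranclp_trans[rotated])
qed

lemma exchange:
  assumes tree: "is_tree V S" and ac: "a \<in> V" "c \<in> V" "a \<noteq> c" and eS: "{a, c} \<notin> S"
    and j: "Suc j < length (tp S a c)" and f: "f = {tp S a c ! j, tp S a c ! Suc j}"
  shows "is_tree V (insert {a, c} (S - {f}))"
proof -
  define p where "p = tp S a c"
  define n where "n = length p"
  define S' where "S' = insert {a, c} (S - {f})"
  have sg: "simple_graph V S" and con: "connected_on V S" and nc: "\<not> has_cycle S"
    using tree by (auto simp: is_tree_def)
  have pp: "is_path S p" "hd p = a" "last p = c" using tp_props[OF tree ac(1,2)] p_def by auto
  have ne: "p \<noteq> []" using pp by (simp add: is_path_def)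
  have l: "p ! (n - 1) = c" "p ! 0 = a" using ne pp by (auto simp: last_conv_nth hd_conv_nth n_def)
  have jn: "Suc j < n" using j p_def n_def by simp
  have fS: "f \<in> S" using is_pathD[OF pp(1) jn[unfolded n_def]] f p_def by simp
  have sg': "simple_graph V S'"
    unfolding simple_graph_def S'_def
  proof (intro conjI ballI)
    show "finite V" using sg by (simp add: simple_graph_def)
    fix e assume "e \<in> insert {a, c} (S - {f})"
    then show "\<exists>u v. u \<noteq> v \<and> u \<in> V \<and> v \<in> V \<and> e = {u, v}"
    proof
      assume "e = {a, c}" then show ?thesis using ac by (intro exI[of _ a] exI[of _ c]) simp
    next
      assume "e \<in> S - {f}"
      then have eS: "e \<in> S" by simp
      have H: "\<forall>e\<in>S. \<exists>u v. u \<noteq> v \<and> u \<in> V \<and> v \<in> V \<and> e = {u, v}" using sg by (simp add: simple_graph_def)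
      show ?thesis using bspec[OF H eS] .
    qed
  qed
  have nc': "\<not> has_cycle S'"
  proof
    assume hc: "has_cycle S'"
    have nc0: "\<not> has_cycle (S - {f})" using nc has_cycle_mono[of "S - {f}" S] by auto
    have rr: "(adj (S - {f}))\<^sup>*\<^sup>* a c" using add_edge_acyclic[OF nc0 hc[unfolded S'_def]] by simp
    obtain q where q: "is_path (S - {f}) q" "hd q = a" "last q = c" using reach_path[OF rr] by blast
    have "is_path S q" using path_mono[OF q(1) Diff_subset] .
    then have "q = p" using tp_unique[OF tree _ q(2,3)] p_def by simp
    then have "f \<in> S - {f}" using is_pathD[OF q(1), of j] jn f p_def n_def by simp
    then show False by simp
  qed
  have edges_in: "\<And>m. Suc m < n \<Longrightarrow> m \<noteq> j \<Longrightarrow> {p ! m, p ! Suc m} \<in> S'"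
  proof -
    fix m assume m: "Suc m < n" "m \<noteq> j"
    have "{p ! m, p ! Suc m} \<in> S" using is_pathD[OF pp(1)] m n_def by simp
    moreover have "{p ! m, p ! Suc m} \<noteq> f" using path_edge_inj[OF pp(1), of m j] m jn f p_def n_def by auto
    ultimately show "{p ! m, p ! Suc m} \<in> S'" unfolding S'_def by blast
  qed
  have r1: "(adj S')\<^sup>*\<^sup>* (p ! 0) (p ! j)"
    using reach_segment[OF pp(1), of 0 j S'] edges_in jn n_def by auto
  have r2: "(adj S')\<^sup>*\<^sup>* (p ! Suc j) (p ! (n - 1))"
    using reach_segment[OF pp(1), of "Suc j" "n - 1" S'] edges_in jn n_def by auto
  have r3: "adj S' a c" unfolding S'_def adj_def by simp
  have rf: "(adj S')\<^sup>*\<^sup>* (p ! j) (p ! Suc j)"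
  proof -
    have "(adj S')\<^sup>*\<^sup>* (p ! j) a" using reach_sym[OF r1] l by simp
    then have "(adj S')\<^sup>*\<^sup>* (p ! j) c" using r3 by (rule rtranclp.rtrancl_into_rtrancl)
    moreover have "(adj S')\<^sup>*\<^sup>* c (p ! Suc j)" using reach_sym[OF r2] l by simp
    ultimately show ?thesis by (rule rtranclp_trans)
  qed
  have lift: "\<And>x y. adj S x y \<Longrightarrow> (adj S')\<^sup>*\<^sup>* x y"
  proof -
    fix x y assume xy: "adj S x y"
    show "(adj S')\<^sup>*\<^sup>* x y"
    proof (cases "{x, y} = f")
      case True
      then have "(x = p ! j \<and> y = p ! Suc j) \<or> (x = p ! Suc j \<and> y = p ! j)"
        using f p_def by (auto simp: doubleton_eq_iff)
      then show ?thesis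
      proof
        assume "x = p ! j \<and> y = p ! Suc j" then show ?thesis using rf by simp
      next
        assume "x = p ! Suc j \<and> y = p ! j" then show ?thesis using reach_sym[OF rf] by simp
      qed
    next
      case False
      then have "{x, y} \<in> S'" using xy unfolding adj_def S'_def by simp
      then show ?thesis by (intro r_into_rtranclp) (simp add: adj_def)
    qed
  qed
  have con': "connected_on V S'"
    unfolding connected_on_reach
  proof (intro ballI)
    fix u v assume "u \<in> V" "v \<in> V"
    then have "(adj S)\<^sup>*\<^sup>* u v" using con unfolding connected_on_reach by blast
    then show "(adj S')\<^sup>*\<^sup>* u v"
    proof (induction rule: rtranclp_induct)
      case base then show ?case by simp
    next
      case (step y z) show ?case using step.IH lift[OF step.hyps(2)] by (rule rtranclp_trans)
    qed
  qed
  show ?thesis using sg' nc' con' unfolding is_tree_def S'_def by blast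
qed

lemma tdeg_exchange:
  assumes "finite S" "f \<in> S" "e \<notin> S"
  shows "tdeg (insert e (S - {f})) v = tdeg S v - (if v \<in> f then 1 else 0) + (if v \<in> e then 1 else 0)"
proof -
  define A where "A = {x \<in> S. v \<in> x}"
  have fA: "finite A" using assms(1) A_def by simp
  have c1: "card (A - {f}) = card A - (if v \<in> f then 1 else 0)"
    using fA assms(2) A_def by (auto simp: card_Diff_singleton)
  show ?thesis
  proof (cases "v \<in> e")
    case True
    have "{x \<in> insert e (S - {f}). v \<in> x} = insert e (A - {f})" using True A_def by auto
    moreover have "e \<notin> A - {f}" using assms(3) A_def by auto
    ultimately have "tdeg (insert e (S - {f})) v = card (A - {f}) + 1"
      unfolding tdeg_def using fA by simp
    then show ?thesis using c1 True A_def by (simp add: tdeg_def)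
  next
    case False
    have "{x \<in> insert e (S - {f}). v \<in> x} = A - {f}" using False A_def by auto
    then show ?thesis using c1 False A_def by (simp add: tdeg_def)
  qed
qed

lemma tree_spanning: "is_tree V S \<Longrightarrow> S \<subseteq> E \<Longrightarrow> spanning_tree V E S"
  unfolding is_tree_def spanning_tree_def by blast



lemma edge_sym: "{a, b} \<in> S \<Longrightarrow> {b, a} \<in> S"
  by (simp add: insert_commute)

lemma deg_ge2:
  assumes "finite S" "{q, a} \<in> S" "{q, b} \<in> S" "a \<noteq> b"
  shows "tdeg S q \<ge> 2"
proof -
  have "{a, b} \<noteq> {}" by simp
  have sub: "{{q, a}, {q, b}} \<subseteq> {e \<in> S. q \<in> e}" using assms by auto
  have ne: "{q, a} \<noteq> {q, b}" using assms(4) by (auto simp: doubleton_eq_iff)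
  have "card {{q, a}, {q, b}} = 2" using ne by simp
  moreover have "card {{q, a}, {q, b}} \<le> card {e \<in> S. q \<in> e}" using sub assms(1) by (intro card_mono) auto
  ultimately show ?thesis unfolding tdeg_def by simp
qed

lemma deg_ge1:
  assumes "finite S" "{q, a} \<in> S"
  shows "tdeg S q \<ge> 1"
proof -
  have "{q, a} \<in> {e \<in> S. q \<in> e}" using assms by auto
  then have "{e \<in> S. q \<in> e} \<noteq> {}" by blast
  then show ?thesis unfolding tdeg_def using assms(1) by (simp add: Suc_le_eq card_gt_0_iff)
qed

lemma nbr1:
  assumes "finite S" "{q, a} \<in> S" "tdeg S q \<le> 1" "{q, c} \<in> S"
  shows "c = a"
proof (rule ccontr)
  assume "c \<noteq> a"
  then have "tdeg S q \<ge> 2" using deg_ge2[OF assms(1,2,4)] by simp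
  then show False using assms(3) by simp
qed

lemma nbr2:
  assumes "finite S" "{q, a} \<in> S" "{q, b} \<in> S" "a \<noteq> b" "tdeg S q \<le> 2" "{q, c} \<in> S"
  shows "c = a \<or> c = b"
proof (rule ccontr)
  assume h: "\<not> (c = a \<or> c = b)"
  have sub: "{{q, a}, {q, b}, {q, c}} \<subseteq> {e \<in> S. q \<in> e}" using assms by auto
  have n1: "{q, a} \<noteq> {q, b}" using assms(4) by (auto simp: doubleton_eq_iff)
  have n2: "{q, a} \<noteq> {q, c}" using h by (auto simp: doubleton_eq_iff)
  have n3: "{q, b} \<noteq> {q, c}" using h by (auto simp: doubleton_eq_iff)
  have "card {{q, a}, {q, b}, {q, c}} = 3" using n1 n2 n3 by simp
  moreover have "card {{q, a}, {q, b}, {q, c}} \<le> card {e \<in> S. q \<in> e}" using sub assms(1) by (intro card_mono) auto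
  ultimately show False using assms(5) unfolding tdeg_def by simp
qed

lemma nonbranch_deg: "v \<in> V \<Longrightarrow> v \<notin> branches V S \<Longrightarrow> tdeg S v \<le> 2"
  unfolding branches_def by simp

lemma leaf_deg: "v \<in> leaves V S \<Longrightarrow> tdeg S v = 1 \<and> v \<in> V"
  unfolding leaves_def by simp

lemma tree_sg: "is_tree V S \<Longrightarrow> simple_graph V S"
  unfolding is_tree_def by simp

lemma tree_finite: "is_tree V S \<Longrightarrow> finite S"
  by (rule sg_finite[OF tree_sg])

lemma path_edge_sym: "is_path S p \<Longrightarrow> Suc i < length p \<Longrightarrow> {p ! Suc i, p ! i} \<in> S"
  by (rule edge_sym[OF is_pathD])

lemma forced_walk:
  assumes tr: "is_tree V S" and l: "lf \<in> leaves V S"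
    and p: "is_path S p" "hd p = lf" "\<forall>k. Suc k < length p \<longrightarrow> p ! k \<notin> branches V S"
    and q: "is_path S q" "hd q = lf" "\<forall>k. Suc k < length q \<longrightarrow> q ! k \<notin> branches V S"
  shows "i < length p \<Longrightarrow> i < length q \<Longrightarrow> p ! i = q ! i"
proof (induction i rule: less_induct)
  case (less i)
  have fin: "finite S" using tree_finite[OF tr] .
  have sg: "simple_graph V S" using tree_sg[OF tr] .
  have lV: "lf \<in> V" using leaf_deg[OF l] by simp
  have pne: "p \<noteq> []" "q \<noteq> []" using p(1) q(1) by (auto simp: is_path_def)
  have h0: "p ! 0 = lf" "q ! 0 = lf" using p(2) q(2) pne by (auto simp: hd_conv_nth)
  show ?case
  proof (cases i)
    case 0 then show ?thesis using h0 by simp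
  next
    case (Suc m)
    show ?thesis
    proof (cases m)
      case 0
      have e1: "{lf, p ! 1} \<in> S" using is_pathD[OF p(1), of 0] less.prems Suc 0 h0 by simp
      have e2: "{lf, q ! 1} \<in> S" using is_pathD[OF q(1), of 0] less.prems Suc 0 h0 by simp
      have "tdeg S lf \<le> 1" using leaf_deg[OF l] by simp
      then show ?thesis using nbr1[OF fin e1 _ e2] Suc 0 by simp
    next
      case (Suc k)
      have ih1: "p ! m = q ! m" using less.IH[of m] less.prems \<open>i = Suc m\<close> by simp
      have ih0: "p ! k = q ! k" using less.IH[of k] less.prems \<open>i = Suc m\<close> Suc by simp
      define c where "c = p ! m"
      have cV: "c \<in> V" using path_nth_V[OF sg p(1), of m] p(2) lV less.prems \<open>i = Suc m\<close> c_def by simp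
      have cB: "c \<notin> branches V S" using p(3) less.prems \<open>i = Suc m\<close> c_def by simp
      have dc: "tdeg S c \<le> 2" using nonbranch_deg[OF cV cB] .
      have ea: "{c, p ! k} \<in> S" using path_edge_sym[OF p(1), of k] Suc less.prems \<open>i = Suc m\<close> c_def by simp
      have eb: "{c, p ! i} \<in> S" using is_pathD[OF p(1), of m] less.prems \<open>i = Suc m\<close> c_def by simp
      have ec: "{c, q ! i} \<in> S" using is_pathD[OF q(1), of m] less.prems \<open>i = Suc m\<close> c_def ih1 by simp
      have dp: "distinct p" "distinct q" using p(1) q(1) by (auto simp: is_path_def)
      have ab: "p ! k \<noteq> p ! i" using nth_eq_iff_index_eq[OF dp(1), of k i] less.prems \<open>i = Suc m\<close> Suc by simp
      have qk: "q ! i \<noteq> q ! k" using nth_eq_iff_index_eq[OF dp(2), of i k] less.prems \<open>i = Suc m\<close> Suc by simp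
      have "q ! i = p ! k \<or> q ! i = p ! i" using nbr2[OF fin ea eb ab dc ec] .
      then show ?thesis using qk ih0 by auto
    qed
  qed
qed



definition good_y :: "'a set \<Rightarrow> 'a set set \<Rightarrow> 'a \<Rightarrow> 'a \<Rightarrow> bool" where
  "good_y V S lf y \<longleftrightarrow> y \<in> branches V S \<and> tpath S lf y \<inter> branches V S = {y}"

lemma branch_V: "y \<in> branches V S \<Longrightarrow> y \<in> V"
  unfolding branches_def by simp

lemma good_path:
  assumes tr: "is_tree V S" and l: "lf \<in> V" and g: "good_y V S lf y"
  shows "is_path S (tp S lf y) \<and> hd (tp S lf y) = lf \<and> last (tp S lf y) = y \<and>
         (\<forall>k. Suc k < length (tp S lf y) \<longrightarrow> tp S lf y ! k \<notin> branches V S)"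
proof -
  define q where "q = tp S lf y"
  have yB: "y \<in> branches V S" using g by (simp add: good_y_def)
  have yV: "y \<in> V" using branch_V[OF yB] .
  have qp: "is_path S q" "hd q = lf" "last q = y" using tp_props[OF tr l yV] q_def by auto
  have ne: "q \<noteq> []" using qp by (simp add: is_path_def)
  have d: "distinct q" using qp by (simp add: is_path_def)
  have ly: "q ! (length q - 1) = y" using qp ne by (simp add: last_conv_nth)
  have "\<forall>k. Suc k < length q \<longrightarrow> q ! k \<notin> branches V S"
  proof (intro allI impI notI)
    fix k assume k: "Suc k < length q" "q ! k \<in> branches V S"
    have "q ! k \<in> tpath S lf y" using k(1) tpath_tp q_def by (metis Suc_lessD nth_mem)
    then have "q ! k = y" using k(2) g unfolding good_y_def by blast
    then have "k = length q - 1" using nth_eq_iff_index_eq[OF d, of k "length q - 1"] ly k(1) by simp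
    then show False using k(1) by simp
  qed
  then show ?thesis using qp q_def by simp
qed

lemma good_exists:
  assumes tr: "is_tree V S" and l: "lf \<in> V" and bne: "branches V S \<noteq> {}"
  shows "\<exists>y. good_y V S lf y"
proof -
  obtain b0 where b0: "b0 \<in> branches V S" using bne by blast
  have b0V: "b0 \<in> V" using branch_V[OF b0] .
  define P where "P = tp S lf b0"
  have pp: "is_path S P" "hd P = lf" "last P = b0" using tp_props[OF tr l b0V] P_def by auto
  have ne: "P \<noteq> []" using pp by (simp add: is_path_def)
  have ex: "\<exists>j. j < length P \<and> P ! j \<in> branches V S"
    using ne pp b0 by (intro exI[of _ "length P - 1"]) (simp add: last_conv_nth)
  define j where "j = (LEAST j. j < length P \<and> P ! j \<in> branches V S)"
  have j: "j < length P" "P ! j \<in> branches V S" using LeastI_ex[OF ex] j_def by auto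
  have jmin: "\<And>k. k < j \<Longrightarrow> P ! k \<notin> branches V S"
  proof -
    fix k assume "k < j"
    then have "\<not> (k < length P \<and> P ! k \<in> branches V S)" using not_less_Least j_def by blast
    then show "P ! k \<notin> branches V S" using \<open>k < j\<close> j(1) by simp
  qed
  define q where "q = take (Suc j) P"
  have qp: "is_path S q" using path_take[OF pp(1)] q_def by simp
  have qh: "hd q = lf" using pp(2) ne q_def by simp
  have ql: "last q = P ! j" using j(1) q_def by (simp add: take_Suc_conv_app_nth)
  have yV: "P ! j \<in> V" using branch_V[OF j(2)] .
  have tq: "tp S lf (P ! j) = q" using tp_unique[OF tr qp qh ql] .
  have "tpath S lf (P ! j) \<inter> branches V S = {P ! j}"
  proof
    show "tpath S lf (P ! j) \<inter> branches V S \<subseteq> {P ! j}"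
    proof
      fix x assume x: "x \<in> tpath S lf (P ! j) \<inter> branches V S"
      then have "x \<in> set q" using tq by (simp add: tpath_tp)
      then obtain k where k: "k < length q" "q ! k = x" by (auto simp: in_set_conv_nth)
      have kj: "k \<le> j" using k(1) q_def by simp
      have "x = P ! k" using k kj q_def by simp
      then have "\<not> k < j" using jmin x by auto
      then have "k = j" using kj by simp
      then show "x \<in> {P ! j}" using \<open>x = P ! k\<close> by simp
    qed
  next
    have "P ! j \<in> set q" using ql qp by (metis is_path_def last_in_set)
    then show "{P ! j} \<subseteq> tpath S lf (P ! j) \<inter> branches V S" using tq j(2) by (simp add: tpath_tp)
  qed
  then show ?thesis using j(2) unfolding good_y_def by blast
qed

lemma good_unique:
  assumes tr: "is_tree V S" and l: "lf \<in> leaves V S" and g1: "good_y V S lf y1" and g2: "good_y V S lf y2"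
  shows "y1 = y2"
proof -
  have lV: "lf \<in> V" using leaf_deg[OF l] by simp
  define q1 where "q1 = tp S lf y1"
  define q2 where "q2 = tp S lf y2"
  have h1: "is_path S q1" "hd q1 = lf" "last q1 = y1" "\<forall>k. Suc k < length q1 \<longrightarrow> q1 ! k \<notin> branches V S"
    using good_path[OF tr lV g1] q1_def by auto
  have h2: "is_path S q2" "hd q2 = lf" "last q2 = y2" "\<forall>k. Suc k < length q2 \<longrightarrow> q2 ! k \<notin> branches V S"
    using good_path[OF tr lV g2] q2_def by auto
  have fw: "\<And>i. i < length q1 \<Longrightarrow> i < length q2 \<Longrightarrow> q1 ! i = q2 ! i"
    using forced_walk[OF tr l h1(1,2,4) h2(1,2,4)] by blast
  have ne: "q1 \<noteq> []" "q2 \<noteq> []" using h1 h2 by (auto simp: is_path_def)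
  show ?thesis
  proof (cases "length q1 \<le> length q2")
    case True
    have "y1 = q1 ! (length q1 - 1)" using h1(3) ne by (simp add: last_conv_nth)
    also have "\<dots> = q2 ! (length q1 - 1)" using fw True ne by simp
    finally have "y1 = q2 ! (length q1 - 1)" .
    moreover have "q2 ! (length q1 - 1) \<in> set q2" using True ne by (intro nth_mem) (cases "length q1"; simp)
    ultimately have "y1 \<in> set q2" by simp
    then have "y1 \<in> tpath S lf y2 \<inter> branches V S" using g1 q2_def unfolding good_y_def by (simp add: tpath_tp)
    then show ?thesis using g2 unfolding good_y_def by blast
  next
    case False
    have "y2 = q2 ! (length q2 - 1)" using h2(3) ne by (simp add: last_conv_nth)
    also have "\<dots> = q1 ! (length q2 - 1)" using fw False ne by simp
    finally have "y2 = q1 ! (length q2 - 1)" .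
    moreover have "q1 ! (length q2 - 1) \<in> set q1" using False ne by (intro nth_mem) simp
    ultimately have "y2 \<in> set q1" by simp
    then have "y2 \<in> tpath S lf y1 \<inter> branches V S" using g2 q1_def unfolding good_y_def by (simp add: tpath_tp)
    then show ?thesis using g1 unfolding good_y_def by auto
  qed
qed

lemma stem_eq:
  assumes tr: "is_tree V S" and l: "lf \<in> leaves V S" and bne: "branches V S \<noteq> {}"
  obtains y where "good_y V S lf y" "stem_removed V S lf = tpath S lf y - {y}"
proof -
  have lV: "lf \<in> V" using leaf_deg[OF l] by simp
  obtain y where g: "good_y V S lf y" using good_exists[OF tr lV bne] by blast
  have "(THE y. y \<in> branches V S \<and> tpath S lf y \<inter> branches V S = {y}) = y"
  proof (rule the_equality)
    show "y \<in> branches V S \<and> tpath S lf y \<inter> branches V S = {y}" using g unfolding good_y_def .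
    fix y' assume "y' \<in> branches V S \<and> tpath S lf y' \<inter> branches V S = {y'}"
    then have "good_y V S lf y'" unfolding good_y_def .
    then show "y' = y" using good_unique[OF tr l _ g] by blast
  qed
  then have "stem_removed V S lf = tpath S lf y - {y}" unfolding stem_removed_def Let_def by simp
  then show ?thesis using g that by blast
qed

lemma stem_path:
  assumes tr: "is_tree V S" and l: "lf \<in> leaves V S" and bne: "branches V S \<noteq> {}"
    and w: "w \<in> stem_removed V S lf"
  shows "\<exists>p. is_path S p \<and> hd p = lf \<and> last p = w \<and> set p \<inter> branches V S = {}"
proof -
  have lV: "lf \<in> V" using leaf_deg[OF l] by simp
  obtain y where g: "good_y V S lf y" and st: "stem_removed V S lf = tpath S lf y - {y}"
    using stem_eq[OF tr l bne] by blast
  define q where "q = tp S lf y"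
  have h: "is_path S q" "hd q = lf" "last q = y" "\<forall>k. Suc k < length q \<longrightarrow> q ! k \<notin> branches V S"
    using good_path[OF tr lV g] q_def by auto
  have ne: "q \<noteq> []" using h by (simp add: is_path_def)
  have d: "distinct q" using h by (simp add: is_path_def)
  have "w \<in> set q" "w \<noteq> y" using w st q_def by (auto simp: tpath_tp)
  then obtain k where k: "k < length q" "q ! k = w" by (auto simp: in_set_conv_nth)
  have "k \<noteq> length q - 1" using k \<open>w \<noteq> y\<close> h(3) ne by (auto simp: last_conv_nth)
  then have kk: "Suc k < length q" using k(1) by simp
  define p where "p = take (Suc k) q"
  have pp: "is_path S p" using path_take[OF h(1)] p_def by simp
  have ph: "hd p = lf" using h(2) ne p_def by simp
  have pl: "last p = w" using k p_def by (simp add: take_Suc_conv_app_nth)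
  have "set p \<inter> branches V S = {}"
  proof (rule ccontr)
    assume "set p \<inter> branches V S \<noteq> {}"
    then obtain x where x: "x \<in> set p" "x \<in> branches V S" by blast
    then obtain i where i: "i < length p" "p ! i = x" by (auto simp: in_set_conv_nth)
    have "i \<le> k" using i(1) p_def by simp
    then have "Suc i < length q" using kk by simp
    moreover have "q ! i = x" using i \<open>i \<le> k\<close> p_def by simp
    ultimately show False using h(4) x(2) by blast
  qed
  then show ?thesis using pp ph pl by blast
qed

lemma path_stem:
  assumes tr: "is_tree V S" and l: "lf \<in> leaves V S" and bne: "branches V S \<noteq> {}"
    and p: "is_path S p" "hd p = lf" "set p \<inter> branches V S = {}"
  shows "last p \<in> stem_removed V S lf"
proof -
  have lV: "lf \<in> V" using leaf_deg[OF l] by simp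
  obtain y where g: "good_y V S lf y" and st: "stem_removed V S lf = tpath S lf y - {y}"
    using stem_eq[OF tr l bne] by blast
  define q where "q = tp S lf y"
  have h: "is_path S q" "hd q = lf" "last q = y" "\<forall>k. Suc k < length q \<longrightarrow> q ! k \<notin> branches V S"
    using good_path[OF tr lV g] q_def by auto
  have yB: "y \<in> branches V S" using g by (simp add: good_y_def)
  have pB: "\<forall>k. Suc k < length p \<longrightarrow> p ! k \<notin> branches V S"
    using p(3) by (metis Suc_lessD disjoint_iff nth_mem)
  have fw: "\<And>i. i < length p \<Longrightarrow> i < length q \<Longrightarrow> p ! i = q ! i"
    using forced_walk[OF tr l p(1,2) pB h(1,2,4)] by blast
  have ne: "p \<noteq> []" "q \<noteq> []" using p h by (auto simp: is_path_def)
  show ?thesis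
  proof (cases "length q \<le> length p")
    case True
    have "y = q ! (length q - 1)" using h(3) ne by (simp add: last_conv_nth)
    also have "\<dots> = p ! (length q - 1)" using fw True ne by simp
    finally have "y = p ! (length q - 1)" .
    moreover have "p ! (length q - 1) \<in> set p" using True ne by (intro nth_mem) (cases "length q"; simp)
    ultimately have "y \<in> set p" by simp
    then show ?thesis using p(3) yB by blast
  next
    case False
    have "last p = p ! (length p - 1)" using ne by (simp add: last_conv_nth)
    also have "\<dots> = q ! (length p - 1)" using fw False ne by simp
    finally have "last p = q ! (length p - 1)" .
    moreover have "q ! (length p - 1) \<in> set q" using False ne by (intro nth_mem) simp
    ultimately have "last p \<in> set q" by simp
    moreover have "last p \<noteq> y" using p(3) yB ne by (metis disjoint_iff last_in_set)
    ultimately show ?thesis using st q_def by (simp add: tpath_tp)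
  qed
qed



lemma closure_avoid:
  assumes Q: "\<forall>q\<in>Q. tdeg S q \<noteq> 1 \<and> (\<forall>c. {q, c} \<in> S \<longrightarrow> c \<in> Q \<union> branches V S)"
  shows "is_path S p \<Longrightarrow> hd p \<in> leaves V S \<Longrightarrow> set p \<inter> branches V S = {} \<Longrightarrow> set p \<inter> Q = {}"
proof (induction p rule: rev_induct)
  case Nil then show ?case by (simp add: is_path_def)
next
  case (snoc c p')
  show ?case
  proof (cases "p' = []")
    case True
    then have "c \<in> leaves V S" using snoc.prems by simp
    then have "tdeg S c = 1" by (simp add: leaves_def)
    then show ?thesis using Q True by auto
  next
    case False
    have pp: "is_path S p'" using path_take[OF snoc.prems(1), of "length p'"] False by simp
    have hp: "hd p' \<in> leaves V S" using snoc.prems(2) False by simp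
    have bp: "set p' \<inter> branches V S = {}" using snoc.prems(3) by auto
    have ih: "set p' \<inter> Q = {}" using snoc.IH[OF pp hp bp] .
    have e: "{last p', c} \<in> S"
      using is_pathD[OF snoc.prems(1), of "length p' - 1"] False
      by (simp add: nth_append last_conv_nth)
    have lin: "last p' \<in> set p'" using False by simp
    have "c \<notin> Q"
    proof
      assume "c \<in> Q"
      then have "last p' \<in> Q \<union> branches V S" using Q edge_sym[OF e] by blast
      then show False using ih bp lin by blast
    qed
    then show ?thesis using ih by simp
  qed
qed

lemma ham_of_path:
  assumes tr: "is_tree V S" and p: "is_path S p" and len: "length p \<ge> 2"
    and dh: "tdeg S (hd p) = 1" and dl: "tdeg S (last p) = 1" and hV: "hd p \<in> V"
    and nb: "set p \<inter> branches V S = {}"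
  shows "set p = V"
proof -
  have fin: "finite S" using tree_finite[OF tr] .
  have sg: "simple_graph V S" using tree_sg[OF tr] .
  define n where "n = length p"
  have ne: "p \<noteq> []" using len by auto
  have h0: "hd p = p ! 0" "last p = p ! (n - 1)" using ne by (auto simp: hd_conv_nth last_conv_nth n_def)
  have clo: "\<And>k c. k < n \<Longrightarrow> {p ! k, c} \<in> S \<Longrightarrow> c \<in> set p"
  proof -
    fix k c assume k: "k < n" and e: "{p ! k, c} \<in> S"
    show "c \<in> set p"
    proof (cases "k = 0")
      case True
      have e1: "{p ! 0, p ! 1} \<in> S" using is_pathD[OF p, of 0] len n_def by simp
      have "c = p ! 1" using nbr1[OF fin e1 _ ] e True dh h0 by simp
      then show ?thesis using len by simp
    next
      case k0: False
      show ?thesis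
      proof (cases "k = n - 1")
        case True
        have e1: "{p ! (n - 1), p ! (n - 2)} \<in> S"
          using path_edge_sym[OF p, of "n - 2"] len n_def by (simp add: numeral_2_eq_2 Suc_diff_Suc)
        have "c = p ! (n - 2)" using nbr1[OF fin e1 _ ] e True dl h0 by simp
        then show ?thesis using len n_def by simp
      next
        case False
        have kV: "p ! k \<in> V" using path_nth_V[OF sg p hV] k n_def by simp
        have kB: "p ! k \<notin> branches V S" using nb k n_def by (metis disjoint_iff nth_mem)
        have d2: "tdeg S (p ! k) \<le> 2" using nonbranch_deg[OF kV kB] .
        obtain k' where k': "k = Suc k'" using k0 by (cases k) auto
        have ea: "{p ! k, p ! k'} \<in> S" using path_edge_sym[OF p, of k'] k' k n_def by simp
        have eb: "{p ! k, p ! Suc k} \<in> S" using is_pathD[OF p, of k] k False n_def by simp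
        have d: "distinct p" using p by (simp add: is_path_def)
        have ab: "p ! k' \<noteq> p ! Suc k" using nth_eq_iff_index_eq[OF d, of k' "Suc k"] k k' False n_def by simp
        have "c = p ! k' \<or> c = p ! Suc k" using nbr2[OF fin ea eb ab d2 e] .
        then show ?thesis using k k' False n_def by auto
      qed
    qed
  qed
  have reach_in: "\<And>v. (adj S)\<^sup>*\<^sup>* (hd p) v \<Longrightarrow> v \<in> set p"
  proof -
    fix v assume "(adj S)\<^sup>*\<^sup>* (hd p) v"
    then show "v \<in> set p"
    proof (induction rule: rtranclp_induct)
      case base then show ?case using ne by simp
    next
      case (step y z)
      then obtain k where "k < n" "p ! k = y" by (auto simp: in_set_conv_nth n_def)
      then show ?case using clo step.hyps(2) by (auto simp: adj_def)
    qed
  qed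
  have "V \<subseteq> set p"
  proof
    fix v assume "v \<in> V"
    then have "(adj S)\<^sup>*\<^sup>* (hd p) v" using tr hV unfolding is_tree_def connected_on_reach by blast
    then show "v \<in> set p" using reach_in by blast
  qed
  moreover have "set p \<subseteq> V" using path_set_V[OF sg p hV] .
  ultimately show ?thesis by blast
qed

lemma leaves_exchange:
  assumes fin: "finite S" and f: "f \<in> S" and e: "e \<notin> S" and ed: "\<forall>w\<in>e. tdeg S w \<ge> 1"
  shows "leaves V (insert e (S - {f})) \<subseteq> (leaves V S - (e - f)) \<union> {w \<in> f - e. tdeg S w = 2}"
proof
  fix w assume w: "w \<in> leaves V (insert e (S - {f}))"
  have wV: "w \<in> V" and d1: "tdeg (insert e (S - {f})) w = 1" using w by (auto simp: leaves_def)
  have eq: "tdeg (insert e (S - {f})) w = tdeg S w - (if w \<in> f then 1 else 0) + (if w \<in> e then 1 else 0)"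
    using tdeg_exchange[OF fin f e] .
  have fpos: "w \<in> f \<Longrightarrow> tdeg S w \<ge> 1"
  proof -
    assume "w \<in> f"
    then have "f \<in> {x \<in> S. w \<in> x}" using f by simp
    then have "{x \<in> S. w \<in> x} \<noteq> {}" by blast
    then show "tdeg S w \<ge> 1" unfolding tdeg_def using fin by (simp add: Suc_le_eq card_gt_0_iff)
  qed
  show "w \<in> (leaves V S - (e - f)) \<union> {w \<in> f - e. tdeg S w = 2}"
  proof (cases "w \<in> e")
    case True
    then have "tdeg S w \<ge> 1" using ed by blast
    then show ?thesis using eq d1 True wV by (cases "w \<in> f") (auto simp: leaves_def)
  next
    case False
    then show ?thesis using eq d1 wV fpos by (cases "w \<in> f") (auto simp: leaves_def)
  qed
qed

lemma card_less_remove: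
  assumes "finite L" "a \<in> L"
  shows "card (L - {a}) < card L"
  using card_Diff1_less[OF assms] .

lemma card_less_remove2:
  assumes "finite L" "a \<in> L" "c \<in> L" "a \<noteq> c"
  shows "card ((L - {a, c}) \<union> {t}) < card L"
proof -
  have "card ((L - {a, c}) \<union> {t}) \<le> card (L - {a, c}) + card {t}" by (rule card_Un_le)
  moreover have "card (L - {a, c}) = card L - 2" using assms by (simp add: card_Diff_subset)
  moreover have "card L \<ge> 2"
  proof -
    have "{a, c} \<subseteq> L" using assms by simp
    then have "card {a, c} \<le> card L" using assms(1) by (rule card_mono[rotated])
    then show ?thesis using assms(4) by simp
  qed
  ultimately show ?thesis by simp
qed

lemma card_le_swap:
  assumes "finite L" "a \<in> L"
  shows "card ((L - {a}) \<union> {t}) \<le> card L"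
proof -
  have "card ((L - {a}) \<union> {t}) \<le> card (L - {a}) + card {t}" by (rule card_Un_le)
  moreover have "card (L - {a}) = card L - 1" using assms by simp
  moreover have "card L \<ge> 1" using assms by (metis One_nat_def Suc_leI card_gt_0_iff empty_iff)
  ultimately show ?thesis by simp
qed



locale claim_setting =
  fixes V :: "'a set" and E T b r
  assumes sg: "simple_graph V E"
    and noham: "\<not> (\<exists>p. hamiltonian_path V E p)"
    and c2: "C2 V E T"
    and bB: "b \<in> branches V T" and rB: "r \<in> branches V T"
    and bp: "tpath T b r \<inter> branches V T = {b, r}"
begin

lemma c1: "C1 V E T" using c2 by (simp add: C2_def)
lemma st: "spanning_tree V E T" using c1 by (simp add: C1_def)
lemma tr: "is_tree V T" using spanning_is_tree[OF sg st] .
lemma TE: "T \<subseteq> E" using st by (simp add: spanning_tree_def)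
lemma finT: "finite T" using tree_finite[OF tr] .
lemma finV: "finite V" using sg by (simp add: simple_graph_def)
lemma minL: "spanning_tree V E T' \<Longrightarrow> card (leaves V T) \<le> card (leaves V T')"
  using c1 by (simp add: C1_def)
lemma maxR: "C1 V E T' \<Longrightarrow> card (R_stem_verts V T') \<le> card (R_stem_verts V T)"
  using c2 by (simp add: C2_def)
lemma finL: "finite (leaves V T)" using finV by (simp add: leaves_def)
lemma bne: "branches V T \<noteq> {}" using bB by blast
lemma bV: "b \<in> V" using branch_V[OF bB] .
lemma rV: "r \<in> V" using branch_V[OF rB] .

definition P where "P = tp T b r"

lemma Pp: "is_path T P" "hd P = b" "last P = r" "tpath T b r = set P"
  using tp_props[OF tr bV rV] by (auto simp: P_def tpath_tp)

lemma branch_deg: "y \<in> branches V T \<Longrightarrow> tdeg T y \<ge> 3"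
  by (simp add: branches_def)

lemma leaf_not_branch: "u \<in> leaves V T \<Longrightarrow> u \<notin> branches V T"
  by (simp add: leaves_def branches_def)

lemma interior:
  assumes q: "q \<in> set P - {b, r}"
  shows "tdeg T q = 2 \<and> (\<forall>c. {q, c} \<in> T \<longrightarrow> c \<in> set P)"
proof -
  have ne: "P \<noteq> []" using Pp by (simp add: is_path_def)
  obtain k where k: "k < length P" "P ! k = q" using q by (auto simp: in_set_conv_nth)
  have "k \<noteq> 0"
  proof
    assume "k = 0" then have "q = b" using k Pp(2) ne by (simp add: hd_conv_nth)
    then show False using q by simp
  qed
  moreover have "k \<noteq> length P - 1"
  proof
    assume "k = length P - 1" then have "q = r" using k Pp(3) ne by (simp add: last_conv_nth)
    then show False using q by simp
  qed
  ultimately obtain k' where k': "k = Suc k'" "Suc k < length P" using k by (cases k) auto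
  have ea: "{q, P ! k'} \<in> T" using path_edge_sym[OF Pp(1), of k'] k k' by simp
  have eb: "{q, P ! Suc k} \<in> T" using is_pathD[OF Pp(1), of k] k k' by simp
  have d: "distinct P" using Pp by (simp add: is_path_def)
  have ab: "P ! k' \<noteq> P ! Suc k" using nth_eq_iff_index_eq[OF d, of k' "Suc k"] k k' by simp
  have qV: "q \<in> V" using path_set_V[OF tree_sg[OF tr] Pp(1)] Pp(2) bV q by auto
  have qB: "q \<notin> branches V T" using bp q Pp(4) by blast
  have d2: "tdeg T q \<le> 2" using nonbranch_deg[OF qV qB] .
  have "tdeg T q \<ge> 2" using deg_ge2[OF finT ea eb ab] .
  then have "tdeg T q = 2" using d2 by simp
  moreover have "\<forall>c. {q, c} \<in> T \<longrightarrow> c \<in> set P"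
  proof (intro allI impI)
    fix c assume "{q, c} \<in> T"
    then have "c = P ! k' \<or> c = P ! Suc k" using nbr2[OF finT ea eb ab d2] by blast
    then show "c \<in> set P" using k k' by auto
  qed
  ultimately show ?thesis by blast
qed

lemma Pdeg: "q \<in> set P \<Longrightarrow> tdeg T q \<ge> 2"
proof -
  assume q: "q \<in> set P"
  show ?thesis
  proof (cases "q \<in> {b, r}")
    case True then show ?thesis using branch_deg bB rB by fastforce
  next
    case False then show ?thesis using interior[of q] q by simp
  qed
qed

lemma leaf_notin_P: "u \<in> leaves V T \<Longrightarrow> u \<notin> set P"
  using Pdeg by (fastforce simp: leaves_def)

lemma P_sub: "set P \<subseteq> (set P - {b, r}) \<union> branches V T"
  using bB rB by blast

lemma leaves_nonadj:
  assumes u: "u \<in> leaves V T" and v: "v \<in> leaves V T" and uv: "u \<noteq> v"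
  shows "{u, v} \<notin> E"
proof
  assume e: "{u, v} \<in> E"
  have uV: "u \<in> V" and du: "tdeg T u = 1" using u by (auto simp: leaves_def)
  have vV: "v \<in> V" and dv: "tdeg T v = 1" using v by (auto simp: leaves_def)
  define p where "p = tp T u v"
  define n where "n = length p"
  have pp: "is_path T p" "hd p = u" "last p = v" using tp_props[OF tr uV vV] p_def by auto
  have ne: "p \<noteq> []" using pp by (simp add: is_path_def)
  have h0: "p ! 0 = u" "p ! (n - 1) = v" using pp ne by (auto simp: hd_conv_nth last_conv_nth n_def)
  have n2: "n \<ge> 2"
  proof (rule ccontr)
    assume "\<not> n \<ge> 2"
    then have "n = 1" using ne n_def by (cases n) auto
    then show False using h0 uv by simp
  qed
  have "set p \<inter> branches V T \<noteq> {}"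
  proof
    assume nb: "set p \<inter> branches V T = {}"
    have "set p = V" using ham_of_path[OF tr pp(1) _ _ _ _ nb] n2 du dv pp uV n_def by simp
    moreover have "is_path E p" using path_mono[OF pp(1) TE] .
    ultimately have "hamiltonian_path V E p" by (simp add: hamiltonian_path_def)
    then show False using noham by blast
  qed
  then obtain y where y: "y \<in> set p" "y \<in> branches V T" by blast
  then obtain j where j: "j < n" "p ! j = y" by (auto simp: in_set_conv_nth n_def)
  have "j \<noteq> 0"
  proof
    assume "j = 0" then have "y = u" using j h0 by simp
    then show False using y(2) u leaf_not_branch by simp
  qed
  have "j \<noteq> n - 1"
  proof
    assume "j = n - 1" then have "y = v" using j h0 by simp
    then show False using y(2) v leaf_not_branch by simp
  qed
  then have jn: "Suc j < n" using j by simp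
  define f where "f = {p ! j, p ! Suc j}"
  have fT: "f \<in> T" using is_pathD[OF pp(1), of j] jn f_def n_def by simp
  have eT: "{u, v} \<notin> T"
  proof
    assume "{u, v} \<in> T"
    then have "is_path T [u, v]" using uv by (simp add: is_path_def)
    then have "p = [u, v]" using tp_unique[OF tr, of "[u, v]" u v] p_def by simp
    then show False using jn \<open>j \<noteq> 0\<close> n_def by simp
  qed
  define T' where "T' = insert {u, v} (T - {f})"
  have trT': "is_tree V T'" using exchange[OF tr uV vV uv eT, of j] jn f_def p_def n_def T'_def by simp
  have spT': "spanning_tree V E T'" using tree_spanning[OF trT'] e TE T'_def by auto
  have ed: "\<forall>w\<in>{u, v}. tdeg T w \<ge> 1" using du dv by simp
  have L': "leaves V T' \<subseteq> (leaves V T - {u, v}) \<union> {p ! Suc j}"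
  proof
    fix w assume "w \<in> leaves V T'"
    then have w: "w \<in> (leaves V T - ({u, v} - f)) \<union> {w \<in> f - {u, v}. tdeg T w = 2}"
      using leaves_exchange[OF finT fT eT ed] T'_def by blast
    have yd: "tdeg T y \<ge> 3" using branch_deg[OF y(2)] .
    show "w \<in> (leaves V T - {u, v}) \<union> {p ! Suc j}"
    proof (cases "w \<in> leaves V T - ({u, v} - f)")
      case True
      show ?thesis
      proof (cases "w \<in> {u, v}")
        case True
        then have "w \<in> f" using \<open>w \<in> leaves V T - ({u, v} - f)\<close> by blast
        moreover have "w \<noteq> y" using True y(2) u v leaf_not_branch by auto
        ultimately show ?thesis using f_def j by auto
      next
        case False then show ?thesis using True by blast
      qed
    next
      case False
      then have "w \<in> f" "tdeg T w = 2" using w by auto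
      then have "w \<noteq> y" using yd by auto
      then show ?thesis using \<open>w \<in> f\<close> f_def j by auto
    qed
  qed
  have "card (leaves V T') \<le> card ((leaves V T - {u, v}) \<union> {p ! Suc j})"
    using L' finL by (intro card_mono) auto
  also have "\<dots> < card (leaves V T)" using card_less_remove2[OF finL u v uv] .
  finally show False using minL[OF spT'] by simp
qed

end



lemma leaf_nbr:
  assumes sg: "simple_graph V S" and u: "u \<in> leaves V S"
  shows "\<exists>z. {u, z} \<in> S"
proof -
  have "tdeg S u = 1" using u by (simp add: leaves_def)
  then have "{e \<in> S. u \<in> e} \<noteq> {}" unfolding tdeg_def by (metis card.empty zero_neq_one)
  then obtain e where e: "e \<in> S" "u \<in> e" by blast
  have H: "\<forall>e\<in>S. \<exists>a c. a \<noteq> c \<and> a \<in> V \<and> c \<in> V \<and> e = {a, c}" using sg by (simp add: simple_graph_def)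
  obtain a c where ac: "e = {a, c}" using bspec[OF H e(1)] by blast
  show ?thesis
  proof (cases "u = a")
    case True then show ?thesis using e ac by blast
  next
    case False
    then have "u = c" using e ac by simp
    then have "{u, a} \<in> S" using e ac by (simp add: insert_commute)
    then show ?thesis by blast
  qed
qed

lemma R_mem: "q \<in> R_stem_verts V S \<longleftrightarrow> q \<in> V \<and> (\<forall>l\<in>leaves V S. q \<notin> stem_removed V S l)"
  unfolding R_stem_verts_def by blast

context claim_setting begin

lemma lemmaX:
  assumes x: "x \<in> set P - {b, r}" and w: "w \<in> set P" and wx: "{w, x} \<in> T"
    and u: "u \<in> leaves V T" and ux: "{u, x} \<in> E" and uw: "{u, w} \<in> E"
  shows False
proof -
  have sgT: "simple_graph V T" using tree_sg[OF tr] .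
  have uV: "u \<in> V" and du: "tdeg T u = 1" using u by (auto simp: leaves_def)
  have uP: "u \<notin> set P" using leaf_notin_P[OF u] .
  have xP: "x \<in> set P" using x by simp
  have xV: "x \<in> V" and wV: "w \<in> V" using sg_edge[OF sgT wx] by auto
  have unx: "u \<noteq> x" and unw: "u \<noteq> w" using uP xP w by auto
  have wnx: "w \<noteq> x" using sg_edge[OF sgT wx] by simp
  have xint: "tdeg T x = 2" "\<forall>c. {x, c} \<in> T \<longrightarrow> c \<in> set P" using interior[OF x] by auto
  have uxT: "{u, x} \<notin> T"
  proof
    assume "{u, x} \<in> T"
    then have "{x, u} \<in> T" by (rule edge_sym)
    then have "u \<in> set P" using xint(2) by blast
    then show False using uP by simp
  qed
  obtain z where uz: "{u, z} \<in> T" using leaf_nbr[OF sgT u] by blast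
  have znx: "z \<noteq> x" using uz uxT by auto
  have zV: "z \<in> V" and unz: "u \<noteq> z" using sg_edge[OF sgT uz] by auto
  have zint: "z \<notin> set P - {b, r}"
  proof
    assume "z \<in> set P - {b, r}"
    then have "u \<in> set P" using interior[of z] edge_sym[OF uz] by blast
    then show False using uP by simp
  qed
  have du1: "tdeg T u \<le> 1" using du by simp
  show False
  proof (cases "z = w")
    case True
    have wB: "w \<in> branches V T"
    proof -
      have "w \<notin> set P - {b, r}" using zint True by simp
      then have "w \<in> {b, r}" using w by blast
      then show ?thesis using bB rB by blast
    qed
    define p where "p = [u, w, x]"
    have pp: "is_path T p" using unw unx wnx uz True wx by (simp add: p_def is_path_def nth_Cons')
    have tpe: "tp T u x = p" using tp_unique[OF tr pp] p_def by simp
    define T' where "T' = insert {u, x} (T - {{w, x}})"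
    have trT': "is_tree V T'" using exchange[OF tr uV xV unx uxT, of 1] tpe p_def T'_def by simp
    have spT': "spanning_tree V E T'" using tree_spanning[OF trT'] ux TE T'_def by auto
    have ed: "\<forall>y\<in>{u, x}. tdeg T y \<ge> 1" using du xint by simp
    have L': "leaves V T' \<subseteq> leaves V T - {u}"
    proof
      fix y assume "y \<in> leaves V T'"
      then have y: "y \<in> (leaves V T - ({u, x} - {w, x})) \<union> {y \<in> {w, x} - {u, x}. tdeg T y = 2}"
        using leaves_exchange[OF finT wx uxT ed] T'_def by blast
      have "tdeg T w \<ge> 3" using branch_deg[OF wB] .
      then show "y \<in> leaves V T - {u}" using y unx unw wnx by auto
    qed
    have "card (leaves V T') \<le> card (leaves V T - {u})" using L' finL by (intro card_mono) auto
    also have "\<dots> < card (leaves V T)" using card_less_remove[OF finL u] .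
    finally show False using minL[OF spT'] by simp
  next
    case znw: False
    define p1 where "p1 = tp T u w"
    have p1p: "is_path T p1" "hd p1 = u" "last p1 = w" using tp_props[OF tr uV wV] p1_def by auto
    have ne1: "p1 \<noteq> []" using p1p by (simp add: is_path_def)
    have len1: "length p1 \<ge> 2"
    proof (rule ccontr)
      assume "\<not> length p1 \<ge> 2"
      then have "length p1 = 1" using ne1 by (cases "length p1") auto
      then obtain a where "p1 = [a]" by (auto simp: length_Suc_conv)
      then show False using p1p unw by simp
    qed
    have e10: "{u, p1 ! 1} \<in> T" using is_pathD[OF p1p(1), of 0] len1 p1p(2) ne1 by (simp add: hd_conv_nth)
    have p11: "p1 ! 1 = z" using nbr1[OF finT uz du1 e10] .
    have uwT: "{u, w} \<notin> T"
    proof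
      assume "{u, w} \<in> T"
      then have "w = z" using nbr1[OF finT uz du1] by blast
      then show False using znw by simp
    qed
    define T1 where "T1 = insert {u, w} (T - {{u, z}})"
    have trT1: "is_tree V T1"
      using exchange[OF tr uV wV unw uwT, of 0] len1 p1p(2) ne1 p11 p1_def T1_def by (simp add: hd_conv_nth)
    have finT1: "finite T1" using tree_finite[OF trT1] .
    have uwT1: "{u, w} \<in> T1" using T1_def by simp
    have wxT1: "{w, x} \<in> T1" using wx unw unx T1_def by (auto simp: doubleton_eq_iff)
    define p2 where "p2 = [u, w, x]"
    have pp2: "is_path T1 p2" using unw unx wnx uwT1 wxT1 by (simp add: p2_def is_path_def nth_Cons')
    have tpe2: "tp T1 u x = p2" using tp_unique[OF trT1 pp2] p2_def by simp
    have uxT1: "{u, x} \<notin> T1" using uxT wnx unx T1_def by (auto simp: doubleton_eq_iff)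
    define T2 where "T2 = insert {u, x} (T1 - {{w, x}})"
    have trT2: "is_tree V T2" using exchange[OF trT1 uV xV unx uxT1, of 1] tpe2 p2_def T2_def by simp
    have T2E: "T2 \<subseteq> E" using TE ux uw T1_def T2_def by auto
    have spT2: "spanning_tree V E T2" using tree_spanning[OF trT2 T2E] .
    have d1: "\<And>v. tdeg T1 v = tdeg T v - (if v \<in> {u, z} then 1 else 0) + (if v \<in> {u, w} then 1 else 0)"
      using tdeg_exchange[OF finT uz uwT] T1_def by simp
    have d2: "\<And>v. tdeg T2 v = tdeg T1 v - (if v \<in> {w, x} then 1 else 0) + (if v \<in> {u, x} then 1 else 0)"
      using tdeg_exchange[OF finT1 wxT1 uxT1] T2_def by simp
    have du2: "tdeg T2 u = 2" using d1[of u] d2[of u] du unw unx by simp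
    have dz2: "tdeg T2 z = tdeg T z - 1" using d1[of z] d2[of z] unz znw znx by simp
    have dw2: "tdeg T2 w = tdeg T w" using d1[of w] d2[of w] unw znw wnx by simp
    have dx2: "tdeg T2 x = tdeg T x" using d1[of x] d2[of x] unx znx wnx xint(1) by simp
    have doth: "\<And>v. v \<notin> {u, z, w, x} \<Longrightarrow> tdeg T2 v = tdeg T v" using d1 d2 by simp
    have dsame: "\<And>v. v \<notin> {u, z} \<Longrightarrow> tdeg T2 v = tdeg T v"
    proof -
      fix v assume "v \<notin> {u, z}"
      then show "tdeg T2 v = tdeg T v" using doth[of v] dw2 dx2 by (cases "v = w"; cases "v = x") auto
    qed
    have zpos: "tdeg T z \<ge> 1" using deg_ge1[OF finT edge_sym[OF uz]] .
    have L2: "leaves V T2 \<subseteq> (leaves V T - {u}) \<union> {z}"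
    proof
      fix v assume "v \<in> leaves V T2"
      then have vV: "v \<in> V" and dv: "tdeg T2 v = 1" by (auto simp: leaves_def)
      show "v \<in> (leaves V T - {u}) \<union> {z}"
      proof (cases "v \<in> {u, z}")
        case True then show ?thesis using du2 dv by auto
      next
        case False then show ?thesis using dsame[of v] dv vV by (auto simp: leaves_def)
      qed
    qed
    show False
    proof (cases "tdeg T z = 2")
      case False
      have "z \<notin> leaves V T2" using dz2 False zpos by (auto simp: leaves_def)
      then have "leaves V T2 \<subseteq> leaves V T - {u}" using L2 by blast
      then have "card (leaves V T2) \<le> card (leaves V T - {u})" using finL by (intro card_mono) auto
      also have "\<dots> < card (leaves V T)" using card_less_remove[OF finL u] .
      finally show False using minL[OF spT2] by simp
    next
      case dz: True
      have finL2: "finite (leaves V T2)" using finV by (simp add: leaves_def)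
      have c1T2: "C1 V E T2"
        unfolding C1_def
      proof (intro conjI allI impI)
        show "spanning_tree V E T2" using spT2 .
        fix T' assume "spanning_tree V E T'"
        have "card (leaves V T2) \<le> card ((leaves V T - {u}) \<union> {z})" using L2 finL by (intro card_mono) auto
        also have "\<dots> \<le> card (leaves V T)" using card_le_swap[OF finL u] .
        also have "\<dots> \<le> card (leaves V T')" using minL[OF \<open>spanning_tree V E T'\<close>] .
        finally show "card (leaves V T2) \<le> card (leaves V T')" .
      qed
      have BEQ: "branches V T2 = branches V T"
      proof -
        have "\<And>v. tdeg T2 v \<ge> 3 \<longleftrightarrow> tdeg T v \<ge> 3"
        proof -
          fix v show "tdeg T2 v \<ge> 3 \<longleftrightarrow> tdeg T v \<ge> 3"
          proof (cases "v \<in> {u, z}")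
            case True then show ?thesis using du2 du dz2 dz by auto
          next
            case False then show ?thesis using dsame[of v] by simp
          qed
        qed
        then show ?thesis unfolding branches_def by blast
      qed
      have bne2: "branches V T2 \<noteq> {}" using BEQ bne by simp
      have T2mem: "\<And>q c. {q, c} \<in> T2 \<Longrightarrow> {q, c} = {u, x} \<or> {q, c} = {u, w} \<or> ({q, c} \<in> T \<and> {q, c} \<noteq> {u, z})"
        unfolding T2_def T1_def by blast
      define Q2 where "Q2 = (set P - {b, r}) \<union> {u}"
      have PQ: "set P \<subseteq> Q2 \<union> branches V T2" using P_sub BEQ Q2_def by blast
      have Qcl: "\<forall>q\<in>Q2. tdeg T2 q \<noteq> 1 \<and> (\<forall>c. {q, c} \<in> T2 \<longrightarrow> c \<in> Q2 \<union> branches V T2)"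
      proof
        fix q assume q: "q \<in> Q2"
        show "tdeg T2 q \<noteq> 1 \<and> (\<forall>c. {q, c} \<in> T2 \<longrightarrow> c \<in> Q2 \<union> branches V T2)"
        proof (cases "q = u")
          case True
          have "\<forall>c. {q, c} \<in> T2 \<longrightarrow> c \<in> Q2 \<union> branches V T2"
          proof (intro allI impI)
            fix c assume qc: "{q, c} \<in> T2"
            show "c \<in> Q2 \<union> branches V T2"
            proof (cases "{q, c} = {u, x}")
              case True
              then have "c = x" using \<open>q = u\<close> by (auto simp: doubleton_eq_iff)
              then show ?thesis using x Q2_def by simp
            next
              case nx: False
              show ?thesis
              proof (cases "{q, c} = {u, w}")
                case True
                then have "c = w" using \<open>q = u\<close> by (auto simp: doubleton_eq_iff)
                then show ?thesis using w PQ by blast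
              next
                case False
                then have "{u, c} \<in> T" "{u, c} \<noteq> {u, z}" using T2mem[OF qc] nx \<open>q = u\<close> by auto
                then show ?thesis using nbr1[OF finT uz du1] by blast
              qed
            qed
          qed
          then show ?thesis using du2 True by simp
        next
          case False
          then have qi: "q \<in> set P - {b, r}" using q Q2_def by simp
          have qz: "q \<noteq> z" using qi zint by blast
          have dq: "tdeg T2 q = 2" using dsame[of q] False qz interior[OF qi] by simp
          have "\<forall>c. {q, c} \<in> T2 \<longrightarrow> c \<in> Q2 \<union> branches V T2"
          proof (intro allI impI)
            fix c assume qc: "{q, c} \<in> T2"
            show "c \<in> Q2 \<union> branches V T2"
            proof (cases "{q, c} \<in> T")
              case True
              then have "c \<in> set P" using interior[OF qi] by blast
              then show ?thesis using PQ by blast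
            next
              case nT: False
              then have "{q, c} = {u, x} \<or> {q, c} = {u, w}" using T2mem[OF qc] by blast
              then have "c = u" using False by (auto simp: doubleton_eq_iff)
              then show ?thesis using Q2_def by simp
            qed
          qed
          then show ?thesis using dq by simp
        qed
      qed
      have avoid: "\<And>p. is_path T2 p \<Longrightarrow> hd p \<in> leaves V T2 \<Longrightarrow> set p \<inter> branches V T2 = {} \<Longrightarrow> set p \<inter> Q2 = {}"
        using closure_avoid[OF Qcl] by blast
      have Rsub: "R_stem_verts V T \<subseteq> R_stem_verts V T2"
      proof
        fix q assume qR: "q \<in> R_stem_verts V T"
        then have qV: "q \<in> V" and qs: "\<forall>l\<in>leaves V T. q \<notin> stem_removed V T l" by (auto simp: R_mem)
        have "\<forall>l\<in>leaves V T2. q \<notin> stem_removed V T2 l"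
        proof (intro ballI notI)
          fix l assume l: "l \<in> leaves V T2" and ql: "q \<in> stem_removed V T2 l"
          obtain p where p: "is_path T2 p" "hd p = l" "last p = q" "set p \<inter> branches V T2 = {}"
            using stem_path[OF trT2 l bne2 ql] by blast
          have pQ: "set p \<inter> Q2 = {}" using avoid[OF p(1) _ p(4)] p(2) l by simp
          have unp: "u \<notin> set p" using pQ Q2_def by blast
          have pT: "is_path T p"
            unfolding is_path_def
          proof (intro conjI allI impI)
            show "p \<noteq> []" "distinct p" using p(1) by (auto simp: is_path_def)
            fix k assume k: "Suc k < length p"
            have e: "{p ! k, p ! Suc k} \<in> T2" using is_pathD[OF p(1) k] .
            have "p ! k \<noteq> u" "p ! Suc k \<noteq> u" using unp k by (auto dest: nth_mem[of _ p])
            then have "{p ! k, p ! Suc k} \<noteq> {u, x}" "{p ! k, p ! Suc k} \<noteq> {u, w}"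
              by (auto simp: doubleton_eq_iff)
            then show "{p ! k, p ! Suc k} \<in> T" using T2mem[OF e] by blast
          qed
          have pB: "set p \<inter> branches V T = {}" using p(4) BEQ by simp
          have "l \<in> (leaves V T - {u}) \<union> {z}" using L2 l by blast
          then show False
          proof
            assume "l \<in> leaves V T - {u}"
            then have "last p \<in> stem_removed V T l" using path_stem[OF tr _ bne pT p(2) pB] by blast
            then show False using qs p(3) \<open>l \<in> leaves V T - {u}\<close> by blast
          next
            assume "l \<in> {z}"
            then have hz: "hd p = z" using p(2) by simp
            have up: "is_path T (u # p)" using path_cons[OF pT unp] hz uz by simp
            have upB: "set (u # p) \<inter> branches V T = {}" using pB leaf_not_branch[OF u] by simp
            have "last (u # p) \<in> stem_removed V T u" using path_stem[OF tr u bne up _ upB] by simp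
            then have "q \<in> stem_removed V T u" using p(1,3) by (simp add: is_path_def)
            then show False using qs u by blast
          qed
        qed
        then show "q \<in> R_stem_verts V T2" using qV by (simp add: R_mem)
      qed
      have uR2: "u \<in> R_stem_verts V T2"
      proof -
        have "\<forall>l\<in>leaves V T2. u \<notin> stem_removed V T2 l"
        proof (intro ballI notI)
          fix l assume l: "l \<in> leaves V T2" and ul: "u \<in> stem_removed V T2 l"
          obtain p where p: "is_path T2 p" "hd p = l" "last p = u" "set p \<inter> branches V T2 = {}"
            using stem_path[OF trT2 l bne2 ul] by blast
          have pQ: "set p \<inter> Q2 = {}" using avoid[OF p(1) _ p(4)] p(2) l by simp
          have "u \<in> set p" using p(1,3) by (metis is_path_def last_in_set)
          then show False using pQ Q2_def by blast
        qed
        then show ?thesis using uV by (simp add: R_mem)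
      qed
      have uR: "u \<notin> R_stem_verts V T"
      proof -
        have pu: "is_path T [u]" by (simp add: is_path_def)
        have "last [u] \<in> stem_removed V T u"
          using path_stem[OF tr u bne pu] leaf_not_branch[OF u] by simp
        then show ?thesis using u by (auto simp: R_mem)
      qed
      have finR2: "finite (R_stem_verts V T2)" using finV unfolding R_stem_verts_def by simp
      have "card (insert u (R_stem_verts V T)) \<le> card (R_stem_verts V T2)"
        using Rsub uR2 finR2 by (intro card_mono) auto
      moreover have "card (insert u (R_stem_verts V T)) = Suc (card (R_stem_verts V T))"
        using uR finite_subset[OF Rsub finR2] by simp
      ultimately show False using maxR[OF c1T2] by simp
    qed
  qed
qed

end


context claim_setting begin

lemma lemmaX12:
  assumes x: "x \<in> set P - {b, r}" and x1: "x1 \<in> set P" and x2: "x2 \<in> set P"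
    and e1: "{x, x1} \<in> T" and e2: "{x, x2} \<in> T" and n12: "x1 \<noteq> x2"
    and x12: "{x1, x2} \<in> E" and u: "u \<in> leaves V T" and v: "v \<in> leaves V T" and uv: "u \<noteq> v"
    and ux: "{u, x} \<in> E" and vx: "{v, x} \<in> E"
  shows False
proof -
  have sgT: "simple_graph V T" using tree_sg[OF tr] .
  have nc: "\<not> has_cycle T" using tr by (simp add: is_tree_def)
  have xV: "x \<in> V" and x1V: "x1 \<in> V" and xn1: "x \<noteq> x1" using sg_edge[OF sgT e1] by auto
  have x2V: "x2 \<in> V" and xn2: "x \<noteq> x2" using sg_edge[OF sgT e2] by auto
  have uV: "u \<in> V" and du: "tdeg T u = 1" using u by (auto simp: leaves_def)
  have vV: "v \<in> V" and dv: "tdeg T v = 1" using v by (auto simp: leaves_def)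
  have uP: "u \<notin> set P" using leaf_notin_P[OF u] .
  have vP: "v \<notin> set P" using leaf_notin_P[OF v] .
  have xP: "x \<in> set P" using x by simp
  have un: "u \<noteq> x" "u \<noteq> x1" "u \<noteq> x2" using uP xP x1 x2 by auto
  have vn: "v \<noteq> x" "v \<noteq> x1" "v \<noteq> x2" using vP xP x1 x2 by auto
  have dx: "tdeg T x = 2" using interior[OF x] by simp
  have dx1: "tdeg T x1 \<ge> 2" using Pdeg[OF x1] .
  have dx2: "tdeg T x2 \<ge> 2" using Pdeg[OF x2] .
  define p0 where "p0 = [x1, x, x2]"
  have pp0: "is_path T p0" using xn1 xn2 n12 edge_sym[OF e1] e2 by (simp add: p0_def is_path_def nth_Cons')
  have tp0: "tp T x1 x2 = p0" using tp_unique[OF tr pp0] p0_def by simp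
  have x12T: "{x1, x2} \<notin> T"
  proof
    assume "{x1, x2} \<in> T"
    then have "has_cycle T" using cycle_of_path[OF pp0] by (simp add: p0_def insert_commute)
    then show False using nc by simp
  qed
  have e1': "{x1, x} \<in> T" using edge_sym[OF e1] .
  define T1 where "T1 = insert {x1, x2} (T - {{x1, x}})"
  have trT1: "is_tree V T1" using exchange[OF tr x1V x2V n12 x12T, of 0] tp0 p0_def T1_def by simp
  have finT1: "finite T1" using tree_finite[OF trT1] .
  have d1: "\<And>w. tdeg T1 w = tdeg T w - (if w \<in> {x1, x} then 1 else 0) + (if w \<in> {x1, x2} then 1 else 0)"
    using tdeg_exchange[OF finT e1' x12T] T1_def by simp
  have d1x: "tdeg T1 x = 1" using d1[of x] dx xn1 xn2 by simp
  have d1u: "tdeg T1 u = 1" using d1[of u] du un by simp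
  have d1x2: "tdeg T1 x2 \<ge> 3" using d1[of x2] dx2 n12 xn2 by simp
  have d1v: "tdeg T1 v = 1" using d1[of v] dv vn by simp
  have xx2T1: "{x, x2} \<in> T1" using e2 n12 xn2 T1_def by (auto simp: doubleton_eq_iff)
  have ed1: "\<forall>w\<in>{x1, x2}. tdeg T w \<ge> 1" using dx1 dx2 by simp
  have L1: "leaves V T1 \<subseteq> leaves V T \<union> {x}"
  proof
    fix w assume "w \<in> leaves V T1"
    then have "w \<in> (leaves V T - ({x1, x2} - {x1, x})) \<union> {w \<in> {x1, x} - {x1, x2}. tdeg T w = 2}"
      using leaves_exchange[OF finT e1' x12T ed1] T1_def by blast
    then show "w \<in> leaves V T \<union> {x}" by auto
  qed
  define p1 where "p1 = tp T1 u x"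
  define n1 where "n1 = length p1"
  have pp1: "is_path T1 p1" "hd p1 = u" "last p1 = x" using tp_props[OF trT1 uV xV] p1_def by auto
  have ne1: "p1 \<noteq> []" using pp1 by (simp add: is_path_def)
  have n1g: "n1 \<ge> 2"
  proof (rule ccontr)
    assume "\<not> n1 \<ge> 2"
    then have "n1 = 1" using ne1 n1_def by (cases n1) auto
    then obtain a where "p1 = [a]" using n1_def by (auto simp: length_Suc_conv)
    then show False using pp1 un by simp
  qed
  have l1: "p1 ! (n1 - 1) = x" using pp1 ne1 by (simp add: last_conv_nth n1_def)
  have el: "{p1 ! (n1 - 2), p1 ! Suc (n1 - 2)} \<in> T1" using is_pathD[OF pp1(1), of "n1 - 2"] n1g n1_def by simp
  have sn: "Suc (n1 - 2) = n1 - 1" using n1g by simp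
  have el': "{x, p1 ! (n1 - 2)} \<in> T1" using edge_sym[OF el] sn l1 by simp
  have px2: "p1 ! (n1 - 2) = x2" using nbr1[OF finT1 xx2T1 _ el'] d1x by simp
  have uxT1: "{u, x} \<notin> T1"
  proof
    assume "{u, x} \<in> T1"
    then have "u = x2" using nbr1[OF finT1 xx2T1 _ edge_sym] d1x by simp
    then show False using un by simp
  qed
  have x2xT1: "{x2, x} \<in> T1" using edge_sym[OF xx2T1] .
  define T2 where "T2 = insert {u, x} (T1 - {{x2, x}})"
  have trT2: "is_tree V T2"
    using exchange[OF trT1 uV xV un(1) uxT1, of "n1 - 2"] n1g px2 sn l1 n1_def p1_def T2_def by simp
  have finT2: "finite T2" using tree_finite[OF trT2] .
  have d2: "\<And>w. tdeg T2 w = tdeg T1 w - (if w \<in> {x2, x} then 1 else 0) + (if w \<in> {u, x} then 1 else 0)"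
    using tdeg_exchange[OF finT1 x2xT1 uxT1] T2_def by simp
  have d2x: "tdeg T2 x = 1" using d2[of x] d1x by simp
  have d2v: "tdeg T2 v = 1" using d2[of v] d1v vn uv by simp
  have ed2: "\<forall>w\<in>{u, x}. tdeg T1 w \<ge> 1" using d1u d1x by simp
  have L2: "leaves V T2 \<subseteq> (leaves V T - {u}) \<union> {x}"
  proof
    fix w assume "w \<in> leaves V T2"
    then have "w \<in> (leaves V T1 - ({u, x} - {x2, x})) \<union> {w \<in> {x2, x} - {u, x}. tdeg T1 w = 2}"
      using leaves_exchange[OF finT1 x2xT1 uxT1 ed2] T2_def by blast
    then have "w \<in> leaves V T1 - {u}" using d1x2 un by auto
    then show "w \<in> (leaves V T - {u}) \<union> {x}" using L1 by blast
  qed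
  have T2E: "T2 \<subseteq> E" using TE x12 ux T1_def T2_def by auto
  have uxT2: "{u, x} \<in> T2" using T2_def by simp
  define p3 where "p3 = tp T2 v x"
  define n3 where "n3 = length p3"
  have pp3: "is_path T2 p3" "hd p3 = v" "last p3 = x" using tp_props[OF trT2 vV xV] p3_def by auto
  have ne3: "p3 \<noteq> []" using pp3 by (simp add: is_path_def)
  have h3: "p3 ! 0 = v" "p3 ! (n3 - 1) = x" using pp3 ne3 by (auto simp: hd_conv_nth last_conv_nth n3_def)
  have n3g: "n3 \<ge> 2"
  proof (rule ccontr)
    assume "\<not> n3 \<ge> 2"
    then have "n3 = 1" using ne3 n3_def by (cases n3) auto
    then show False using h3 vn by simp
  qed
  have "set p3 \<inter> branches V T2 \<noteq> {}"
  proof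
    assume nb: "set p3 \<inter> branches V T2 = {}"
    have "set p3 = V" using ham_of_path[OF trT2 pp3(1) _ _ _ _ nb] n3g d2v d2x pp3 vV n3_def by simp
    moreover have "is_path E p3" using path_mono[OF pp3(1) T2E] .
    ultimately have "hamiltonian_path V E p3" by (simp add: hamiltonian_path_def)
    then show False using noham by blast
  qed
  then obtain y where y: "y \<in> set p3" "y \<in> branches V T2" by blast
  then obtain j where j: "j < n3" "p3 ! j = y" by (auto simp: in_set_conv_nth n3_def)
  have dy: "tdeg T2 y \<ge> 3" using y(2) by (simp add: branches_def)
  have "j \<noteq> n3 - 1"
  proof
    assume "j = n3 - 1" then have "y = x" using j h3 by simp
    then show False using dy d2x by simp
  qed
  then have jn: "Suc j < n3" using j by simp
  define f3 where "f3 = {p3 ! j, p3 ! Suc j}"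
  have f3T: "f3 \<in> T2" using is_pathD[OF pp3(1), of j] jn f3_def n3_def by simp
  have vxT2: "{v, x} \<notin> T2"
  proof
    assume "{v, x} \<in> T2"
    then have "v = u" using nbr1[OF finT2 edge_sym[OF uxT2] _ edge_sym] d2x by simp
    then show False using uv by simp
  qed
  define T3 where "T3 = insert {v, x} (T2 - {f3})"
  have trT3: "is_tree V T3" using exchange[OF trT2 vV xV vn(1) vxT2, of j] jn f3_def p3_def n3_def T3_def by simp
  have spT3: "spanning_tree V E T3" using tree_spanning[OF trT3] T2E vx T3_def by auto
  have ed3: "\<forall>w\<in>{v, x}. tdeg T2 w \<ge> 1" using d2v d2x by simp
  have L3: "leaves V T3 \<subseteq> (leaves V T - {u, v}) \<union> {p3 ! Suc j}"
  proof
    fix w assume "w \<in> leaves V T3"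
    then have w: "w \<in> (leaves V T2 - ({v, x} - f3)) \<union> {w \<in> f3 - {v, x}. tdeg T2 w = 2}"
      using leaves_exchange[OF finT2 f3T vxT2 ed3] T3_def by blast
    show "w \<in> (leaves V T - {u, v}) \<union> {p3 ! Suc j}"
    proof (cases "w \<in> leaves V T2 - ({v, x} - f3)")
      case True
      then have wL2: "w \<in> (leaves V T - {u}) \<union> {x}" using L2 by blast
      show ?thesis
      proof (cases "w \<in> {v, x}")
        case True
        then have "w \<in> f3" using \<open>w \<in> leaves V T2 - ({v, x} - f3)\<close> by blast
        moreover have "w \<noteq> y" using True dy d2v d2x by auto
        ultimately show ?thesis using f3_def j by auto
      next
        case False then show ?thesis using wL2 by blast
      qed
    next
      case False
      then have "w \<in> f3" "tdeg T2 w = 2" using w by auto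
      then have "w \<noteq> y" using dy by auto
      then show ?thesis using \<open>w \<in> f3\<close> f3_def j by auto
    qed
  qed
  have "card (leaves V T3) \<le> card ((leaves V T - {u, v}) \<union> {p3 ! Suc j})"
    using L3 finL by (intro card_mono) auto
  also have "\<dots> < card (leaves V T)" using card_less_remove2[OF finL u v uv] .
  finally show False using minL[OF spT3] by simp
qed

end


context claim_setting begin

lemma main:
  assumes K14: "K14_free V E"
  shows "\<forall>x \<in> tpath T b r - {b, r}. card {l \<in> leaves V T. {x, l} \<in> E} \<le> 1"
proof (intro ballI)
  fix x assume x0: "x \<in> tpath T b r - {b, r}"
  have x: "x \<in> set P - {b, r}" using x0 Pp(4) by simp
  have sgT: "simple_graph V T" using tree_sg[OF tr] .
  show "card {l \<in> leaves V T. {x, l} \<in> E} \<le> 1"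
  proof (rule ccontr)
    define A where "A = {l \<in> leaves V T. {x, l} \<in> E}"
    assume "\<not> card {l \<in> leaves V T. {x, l} \<in> E} \<le> 1"
    then have cA: "card A \<ge> 2" using A_def by simp
    have finA: "finite A" using finL A_def by simp
    have "A \<noteq> {}" using cA by auto
    then obtain u where uA: "u \<in> A" by blast
    have c1u: "card (A - {u}) \<ge> 1" using cA uA finA by simp
    have "A - {u} \<noteq> {}"
    proof
      assume "A - {u} = {}"
      then have "card (A - {u}) = 0" by (simp only: card.empty)
      then show False using c1u by simp
    qed
    then obtain v where vA: "v \<in> A - {u}" by blast
    have u: "u \<in> leaves V T" and xu: "{x, u} \<in> E" using uA A_def by auto
    have v: "v \<in> leaves V T" and xv: "{x, v} \<in> E" and uv: "u \<noteq> v" using vA A_def by auto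
    have ne: "P \<noteq> []" using Pp by (simp add: is_path_def)
    obtain k where k: "k < length P" "P ! k = x" using x by (auto simp: in_set_conv_nth)
    have "k \<noteq> 0"
    proof
      assume "k = 0" then have "x = b" using k Pp(2) ne by (simp add: hd_conv_nth)
      then show False using x by simp
    qed
    moreover have "k \<noteq> length P - 1"
    proof
      assume "k = length P - 1" then have "x = r" using k Pp(3) ne by (simp add: last_conv_nth)
      then show False using x by simp
    qed
    ultimately obtain k' where k': "k = Suc k'" "Suc k < length P" using k by (cases k) auto
    define x1 where "x1 = P ! k'"
    define x2 where "x2 = P ! Suc k"
    have e1: "{x, x1} \<in> T" using path_edge_sym[OF Pp(1), of k'] k k' x1_def by simp
    have e2: "{x, x2} \<in> T" using is_pathD[OF Pp(1), of k] k k' x2_def by simp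
    have d: "distinct P" using Pp by (simp add: is_path_def)
    have n12: "x1 \<noteq> x2" using nth_eq_iff_index_eq[OF d, of k' "Suc k"] k k' x1_def x2_def by simp
    have x1P: "x1 \<in> set P" using k k' x1_def by simp
    have x2P: "x2 \<in> set P" using k' x2_def by simp
    have uP: "u \<notin> set P" using leaf_notin_P[OF u] .
    have vP: "v \<notin> set P" using leaf_notin_P[OF v] .
    have xV: "x \<in> V" and x1V: "x1 \<in> V" using sg_edge[OF sgT e1] by auto
    have x2V: "x2 \<in> V" using sg_edge[OF sgT e2] by auto
    have uV: "u \<in> V" and vV: "v \<in> V" using u v by (auto simp: leaves_def)
    have ux: "{u, x} \<in> E" using edge_sym[OF xu] .
    have vx: "{v, x} \<in> E" using edge_sym[OF xv] .
    have nuv: "{u, v} \<notin> E" using leaves_nonadj[OF u v uv] .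
    have n12E: "{x1, x2} \<notin> E"
    proof
      assume "{x1, x2} \<in> E"
      then show False using lemmaX12[OF x x1P x2P e1 e2 n12 _ u v uv ux vx] by simp
    qed
    have n1u: "{x1, u} \<notin> E"
    proof
      assume "{x1, u} \<in> E"
      then show False using lemmaX[OF x x1P edge_sym[OF e1] u ux edge_sym] by simp
    qed
    have n2u: "{x2, u} \<notin> E"
    proof
      assume "{x2, u} \<in> E"
      then show False using lemmaX[OF x x2P edge_sym[OF e2] u ux edge_sym] by simp
    qed
    have n1v: "{x1, v} \<notin> E"
    proof
      assume "{x1, v} \<in> E"
      then show False using lemmaX[OF x x1P edge_sym[OF e1] v vx edge_sym] by simp
    qed
    have n2v: "{x2, v} \<notin> E"
    proof
      assume "{x2, v} \<in> E"
      then show False using lemmaX[OF x x2P edge_sym[OF e2] v vx edge_sym] by simp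
    qed
    define S4 where "S4 = {x1, x2, u, v}"
    have dist: "x1 \<noteq> u" "x1 \<noteq> v" "x2 \<noteq> u" "x2 \<noteq> v" using x1P x2P uP vP by auto
    have c4: "card S4 = 4" using n12 dist uv S4_def by simp
    have S4V: "S4 \<subseteq> V" using x1V x2V uV vV S4_def by simp
    have adjall: "\<forall>s\<in>S4. {x, s} \<in> E" using e1 e2 TE xu xv S4_def by auto
    have nonadj: "\<forall>s\<in>S4. \<forall>t\<in>S4. s \<noteq> t \<longrightarrow> {s, t} \<notin> E"
      using nuv n12E n1u n2u n1v n2v S4_def by (auto simp: insert_commute)
    have "\<exists>c\<in>V. \<exists>S\<subseteq>V. card S = 4 \<and> (\<forall>x\<in>S. {c, x} \<in> E) \<and> (\<forall>x\<in>S. \<forall>y\<in>S. x \<noteq> y \<longrightarrow> {x, y} \<notin> E)"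
      using xV S4V c4 adjall nonadj by (intro bexI[of _ x] exI[of _ S4]) simp_all
    then show False using K14 unfolding K14_free_def by simp
  qed
qed

end

theorem claim4p4:
  fixes V :: "'a set" and E :: "'a set set" and T :: "'a set set" and b r :: 'a
  assumes "simple_graph V E"
    and "connected_on V E"
    and "K14_free V E"
    and "\<not> (\<exists>p. hamiltonian_path V E p)"
    and "C2 V E T"
    and "b \<in> branches V T" and "r \<in> branches V T"
    and "tpath T b r \<inter> branches V T = {b, r}"
  shows "\<forall>x \<in> tpath T b r - {b, r}. card {l \<in> leaves V T. {x, l} \<in> E} \<le> 1"
proof -
  interpret claim_setting V E T b r
    by unfold_locales (use assms in auto)
  show ?thesis using main[OF assms(3)] .
qed


end
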